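(* Let $I$ be a nonempty set and let $\mathcal{M}_I$ be the Banach algebra whose underlying Banach space is $\ell^1(I\times I)$ with product $(ab)(i,j)=\sum_{k\in I}a(i,k)b(k,j)$. Regard $\ell^1(I)$ as a Banach $\mathcal{M}_I$-bimodule via $(a\cdot b)(i)=\sum_{k\in I}a(i,k)b(k)$ and $(b\cdot a)(i)=\sum_{k\in I}b(k)a(k,i)$ for $a\in\mathcal{M}_I$, $b\in\ell^1(I)$, $i\in I$. Then: (i) $\ell^1(I)$ is a two sided $\mathcal{M}_I$-induced module; (ii) $\mathcal{M}_I$ is a self-induced Banach algebra.
   Context: $\hat{\otimes}$ denotes the completed projective tensor product. For a Banach algebra $A$, a right Banach $A$-module $E$ and a left Banach $A$-module $F$, $E\hat{\otimes}_A F$ is the quotient of $E\hat{\otimes}F$ by the closed linear span of $\{x\cdot a\otimes y-x\otimes a\cdot y\}$. A left Banach $A$-module $E$ is called $A$-induced if the map $\mu_E:A\hat{\otimes}_A E\to E$, $a\otimes x\mapsto a\cdot x$, is an isomorphism (of Banach modules); right induced modules are defined analogously via $E\hat{\otimes}_A A\to E$, and a bimodule is two sided induced if it is both left and right induced. A Banach algebra $A$ is self-induced if the multiplication map $A\hat{\otimes}_A A\to A$, $a\otimes b\mapsto ab$, is an isomorphism of $A$-bimodules. *)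

theory Defs
  imports "HOL-Analysis.Analysis"
begin

definition l1 :: "('i \<Rightarrow> complex) set" where
  "l1 = {f. (\<lambda>i. norm (f i)) summable_on UNIV}"

definition l1norm :: "('i \<Rightarrow> complex) \<Rightarrow> real" where
  "l1norm f = (\<Sum>\<^sub>\<infinity>i. norm (f i))"

definition M_mult :: "('i \<times> 'i \<Rightarrow> complex) \<Rightarrow> ('i \<times> 'i \<Rightarrow> complex) \<Rightarrow> ('i \<times> 'i \<Rightarrow> complex)" where
  "M_mult a b = (\<lambda>(i, j). \<Sum>\<^sub>\<infinity>k. a (i, k) * b (k, j))"

definition M_lact :: "('i \<times> 'i \<Rightarrow> complex) \<Rightarrow> ('i \<Rightarrow> complex) \<Rightarrow> ('i \<Rightarrow> complex)" where
  "M_lact a b = (\<lambda>i. \<Sum>\<^sub>\<infinity>k. a (i, k) * b k)"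

definition M_ract :: "('i \<Rightarrow> complex) \<Rightarrow> ('i \<times> 'i \<Rightarrow> complex) \<Rightarrow> ('i \<Rightarrow> complex)" where
  "M_ract b a = (\<lambda>i. \<Sum>\<^sub>\<infinity>k. b k * a (k, i))"

text \<open>The algebraic tensor product is realised as the free complex vector space on
  X x Y (finitely supported functions) modulo the bilinearity relations; the balanced
  relations x.a (x) y - x (x) a.y are added to the relation space.  The projective
  (quotient) seminorm is the infimum of sum |c_i| |x_i| |y_i| over representatives, and
  the completion is realised by Cauchy sequences for this seminorm.\<close>

definition fsupp :: "('p \<Rightarrow> complex) \<Rightarrow> 'p set" where
  "fsupp u = {p. u p \<noteq> 0}"

definition free_tensor :: "'x set \<Rightarrow> 'y set \<Rightarrow> ('x \<times> 'y \<Rightarrow> complex) set" where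
  "free_tensor X Y = {u. finite (fsupp u) \<and> fsupp u \<subseteq> X \<times> Y}"

definition delta :: "'p \<Rightarrow> 'p \<Rightarrow> complex" where
  "delta p = (\<lambda>q. if q = p then 1 else 0)"

definition lin_span :: "('p \<Rightarrow> complex) set \<Rightarrow> ('p \<Rightarrow> complex) set" where
  "lin_span S = {u. \<exists>G c. finite G \<and> G \<subseteq> S \<and> u = (\<lambda>q. \<Sum>g\<in>G. c g * g q)}"

definition tensor_relations ::
  "('x \<Rightarrow> complex) set \<Rightarrow> ('y \<Rightarrow> complex) set \<Rightarrow> 'b set
   \<Rightarrow> (('x \<Rightarrow> complex) \<Rightarrow> 'b \<Rightarrow> ('x \<Rightarrow> complex))
   \<Rightarrow> ('b \<Rightarrow> ('y \<Rightarrow> complex) \<Rightarrow> ('y \<Rightarrow> complex))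
   \<Rightarrow> (('x \<Rightarrow> complex) \<times> ('y \<Rightarrow> complex) \<Rightarrow> complex) set" where
  "tensor_relations X Y Alg rX lY =
     {(\<lambda>q. delta (\<lambda>t. a t + a' t, y) q - delta (a, y) q - delta (a', y) q) | a a' y.
         a \<in> X \<and> a' \<in> X \<and> y \<in> Y}
   \<union> {(\<lambda>q. delta (a, \<lambda>t. y t + y' t) q - delta (a, y) q - delta (a, y') q) | a y y'.
         a \<in> X \<and> y \<in> Y \<and> y' \<in> Y}
   \<union> {(\<lambda>q. delta (\<lambda>t. c * a t, y) q - c * delta (a, y) q) | c a y. a \<in> X \<and> y \<in> Y}
   \<union> {(\<lambda>q. delta (a, \<lambda>t. c * y t) q - c * delta (a, y) q) | c a y. a \<in> X \<and> y \<in> Y}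
   \<union> {(\<lambda>q. delta (rX a b, y) q - delta (a, lY b y) q) | a b y.
         a \<in> X \<and> b \<in> Alg \<and> y \<in> Y}"

definition bal_seminorm ::
  "('x \<Rightarrow> complex) set \<Rightarrow> (('x \<Rightarrow> complex) \<Rightarrow> real)
   \<Rightarrow> ('y \<Rightarrow> complex) set \<Rightarrow> (('y \<Rightarrow> complex) \<Rightarrow> real) \<Rightarrow> 'b set
   \<Rightarrow> (('x \<Rightarrow> complex) \<Rightarrow> 'b \<Rightarrow> ('x \<Rightarrow> complex))
   \<Rightarrow> ('b \<Rightarrow> ('y \<Rightarrow> complex) \<Rightarrow> ('y \<Rightarrow> complex))
   \<Rightarrow> (('x \<Rightarrow> complex) \<times> ('y \<Rightarrow> complex) \<Rightarrow> complex) \<Rightarrow> real" where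
  "bal_seminorm X nX Y nY Alg rX lY u =
     Inf {(\<Sum>p\<in>fsupp v. norm (v p) * nX (fst p) * nY (snd p)) | v.
            v \<in> free_tensor X Y \<and> (\<lambda>q. u q - v q) \<in> lin_span (tensor_relations X Y Alg rX lY)}"

definition tmap ::
  "(('x \<Rightarrow> complex) \<Rightarrow> ('y \<Rightarrow> complex) \<Rightarrow> ('z \<Rightarrow> complex))
   \<Rightarrow> (('x \<Rightarrow> complex) \<times> ('y \<Rightarrow> complex) \<Rightarrow> complex) \<Rightarrow> ('z \<Rightarrow> complex)" where
  "tmap m u = (\<lambda>t. \<Sum>p\<in>fsupp u. u p * m (fst p) (snd p) t)"

text \<open>The canonical map mu : X (x)^_A Y \<rightarrow> Z induced by m is an isomorphism of Banach
  spaces: it is (well defined and) bounded, and its extension to the completion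
  (Cauchy sequences modulo null sequences) is bijective onto Z with bounded inverse.\<close>
definition induced_iso ::
  "('x \<Rightarrow> complex) set \<Rightarrow> (('x \<Rightarrow> complex) \<Rightarrow> real)
   \<Rightarrow> ('y \<Rightarrow> complex) set \<Rightarrow> (('y \<Rightarrow> complex) \<Rightarrow> real) \<Rightarrow> 'b set
   \<Rightarrow> (('x \<Rightarrow> complex) \<Rightarrow> 'b \<Rightarrow> ('x \<Rightarrow> complex))
   \<Rightarrow> ('b \<Rightarrow> ('y \<Rightarrow> complex) \<Rightarrow> ('y \<Rightarrow> complex))
   \<Rightarrow> (('x \<Rightarrow> complex) \<Rightarrow> ('y \<Rightarrow> complex) \<Rightarrow> ('z \<Rightarrow> complex))
   \<Rightarrow> ('z \<Rightarrow> complex) set \<Rightarrow> (('z \<Rightarrow> complex) \<Rightarrow> real) \<Rightarrow> bool" where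
  "induced_iso X nX Y nY Alg rX lY m Z nZ \<longleftrightarrow>
     (let q = bal_seminorm X nX Y nY Alg rX lY;
          cauchy = (\<lambda>s. (\<forall>n. s n \<in> free_tensor X Y) \<and>
                         (\<forall>e>0. \<exists>N. \<forall>k\<ge>N. \<forall>n\<ge>N. q (\<lambda>p. s k p - s n p) < e));
          conv = (\<lambda>s z. (\<lambda>n. nZ (\<lambda>t. tmap m (s n) t - z t)) \<longlonglongrightarrow> 0)
      in (\<forall>u\<in>free_tensor X Y. tmap m u \<in> Z)
       \<and> (\<exists>C. \<forall>u\<in>free_tensor X Y. nZ (tmap m u) \<le> C * q u)
       \<and> (\<forall>z\<in>Z. \<exists>s. cauchy s \<and> conv s z)
       \<and> (\<forall>s s' z. cauchy s \<and> cauchy s' \<and> z \<in> Z \<and> conv s z \<and> conv s' z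
              \<longrightarrow> (\<lambda>n. q (\<lambda>p. s n p - s' n p)) \<longlonglongrightarrow> 0)
       \<and> (\<exists>C. \<forall>s z. cauchy s \<and> z \<in> Z \<and> conv s z \<longrightarrow> lim (\<lambda>n. q (s n)) \<le> C * nZ z))"

definition l1_left_induced :: "'i itself \<Rightarrow> bool" where
  "l1_left_induced (_::'i itself) \<longleftrightarrow>
     induced_iso (l1 :: ('i \<times> 'i \<Rightarrow> complex) set) l1norm (l1 :: ('i \<Rightarrow> complex) set) l1norm
       (l1 :: ('i \<times> 'i \<Rightarrow> complex) set) M_mult M_lact M_lact (l1 :: ('i \<Rightarrow> complex) set) l1norm"

definition l1_right_induced :: "'i itself \<Rightarrow> bool" where
  "l1_right_induced (_::'i itself) \<longleftrightarrow>
     induced_iso (l1 :: ('i \<Rightarrow> complex) set) l1norm (l1 :: ('i \<times> 'i \<Rightarrow> complex) set) l1norm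
       (l1 :: ('i \<times> 'i \<Rightarrow> complex) set) M_ract M_mult M_ract (l1 :: ('i \<Rightarrow> complex) set) l1norm"

definition M_self_induced :: "'i itself \<Rightarrow> bool" where
  "M_self_induced (_::'i itself) \<longleftrightarrow>
     induced_iso (l1 :: ('i \<times> 'i \<Rightarrow> complex) set) l1norm (l1 :: ('i \<times> 'i \<Rightarrow> complex) set) l1norm
       (l1 :: ('i \<times> 'i \<Rightarrow> complex) set) M_mult M_mult M_mult (l1 :: ('i \<times> 'i \<Rightarrow> complex) set) l1norm"

end

theory Submission
  imports Defs
begin

lemma l1_iff: "f \<in> l1 \<longleftrightarrow> (\<lambda>i. norm (f i)) summable_on UNIV"
  by (simp add: l1_def)

lemma l1_summable: "f \<in> l1 \<Longrightarrow> f summable_on UNIV"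
  by (simp add: l1_def summable_on_iff_abs_summable_on_complex)

lemma l1norm_nonneg: "l1norm f \<ge> 0"
  unfolding l1norm_def by (rule infsum_nonneg) simp

lemma l1_comparison:
  assumes "g \<in> l1" "\<And>i. norm (f i) \<le> C * norm (g i)"
  shows "f \<in> l1" "l1norm f \<le> C * l1norm g"
proof -
  have s: "(\<lambda>i. C * norm (g i)) summable_on UNIV"
    using assms(1) by (intro summable_on_cmult_right) (simp add: l1_def)
  have "(\<lambda>i. norm (f i)) summable_on UNIV"
    by (rule summable_on_comparison_test[OF s]) (use assms(2) in auto)
  then show "f \<in> l1" unfolding l1_def by simp
  then show "l1norm f \<le> C * l1norm g" unfolding l1norm_def
    using infsum_mono[OF _ s, of "\<lambda>i. norm (f i)"] assms(2) infsum_cmult_right'[of C "\<lambda>i. norm (g i)" UNIV]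
    by (simp add: l1_def)
qed

lemma l1_add: "f \<in> l1 \<Longrightarrow> g \<in> l1 \<Longrightarrow> (\<lambda>t. f t + g t) \<in> l1"
proof -
  assume a: "f \<in> l1" "g \<in> l1"
  have "(\<lambda>i. norm (f i + g i)) summable_on UNIV"
    by (rule summable_on_comparison_test[OF summable_on_add[of "\<lambda>i. norm (f i)" _ "\<lambda>i. norm (g i)"]])
     (use a in \<open>auto intro: norm_triangle_ineq simp: l1_def\<close>)
  then show ?thesis by (simp add: l1_def)
qed

lemma l1norm_add: "f \<in> l1 \<Longrightarrow> g \<in> l1 \<Longrightarrow> l1norm (\<lambda>t. f t + g t) \<le> l1norm f + l1norm g"
proof -
  assume a: "f \<in> l1" "g \<in> l1"
  have "infsum (\<lambda>i. norm (f i + g i)) UNIV \<le> infsum (\<lambda>i. norm (f i) + norm (g i)) UNIV"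
    apply (rule infsum_mono)
    using l1_add[OF a] a by (auto simp: l1_def norm_triangle_ineq intro: summable_on_add)
  also have "\<dots> = infsum (\<lambda>i. norm (f i)) UNIV + infsum (\<lambda>i. norm (g i)) UNIV"
    by (rule infsum_add) (use a in \<open>auto simp: l1_def\<close>)
  finally show ?thesis by (simp add: l1norm_def)
qed

lemma l1_scale: "f \<in> l1 \<Longrightarrow> (\<lambda>t. c * f t) \<in> l1"
  using l1_comparison(1)[of f "\<lambda>t. c * f t" "norm c"] by (simp add: norm_mult)

lemma l1norm_scale: "l1norm (\<lambda>t. c * f t) = norm c * l1norm f"
  unfolding l1norm_def by (simp add: norm_mult infsum_cmult_right')

lemma l1_zero[simp]: "(\<lambda>t. 0) \<in> l1"
  by (simp add: l1_def)

lemma l1norm_zero[simp]: "l1norm (\<lambda>t. 0) = 0"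
  by (simp add: l1norm_def)

lemma l1_uminus: "f \<in> l1 \<Longrightarrow> (\<lambda>t. - f t) \<in> l1"
  by (simp add: l1_def)

lemma l1_diff: "f \<in> l1 \<Longrightarrow> g \<in> l1 \<Longrightarrow> (\<lambda>t. f t - g t) \<in> l1"
  using l1_add[of f "\<lambda>t. - g t"] l1_uminus[of g] by simp

lemma l1norm_commute: "l1norm (\<lambda>t. f t - g t) = l1norm (\<lambda>t. g t - f t)"
  unfolding l1norm_def by (simp add: norm_minus_commute)

lemma l1norm_tri:
  assumes "f \<in> l1" "g \<in> l1" "h \<in> l1"
  shows "l1norm (\<lambda>t. f t - h t) \<le> l1norm (\<lambda>t. f t - g t) + l1norm (\<lambda>t. g t - h t)"
  using l1norm_add[OF l1_diff[OF assms(1,2)] l1_diff[OF assms(2,3)]] by simp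

lemma l1_sum: "finite F \<Longrightarrow> (\<And>p. p \<in> F \<Longrightarrow> f p \<in> l1) \<Longrightarrow> (\<lambda>t. \<Sum>p\<in>F. f p t) \<in> l1"
  by (induction F rule: finite_induct) (auto intro: l1_add)

lemma l1norm_sum: "finite F \<Longrightarrow> (\<And>p. p \<in> F \<Longrightarrow> f p \<in> l1) \<Longrightarrow>
    l1norm (\<lambda>t. \<Sum>p\<in>F. f p t) \<le> (\<Sum>p\<in>F. l1norm (f p))"
proof (induction F rule: finite_induct)
  case (insert x F)
  have "l1norm (\<lambda>t. \<Sum>p\<in>insert x F. f p t) = l1norm (\<lambda>t. f x t + (\<Sum>p\<in>F. f p t))"
    using insert by simp
  also have "\<dots> \<le> l1norm (f x) + l1norm (\<lambda>t. \<Sum>p\<in>F. f p t)"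
    by (rule l1norm_add) (use insert in \<open>auto intro: l1_sum\<close>)
  finally show ?case using insert by simp
qed simp

lemma l1_le_norm: "f \<in> l1 \<Longrightarrow> norm (f k) \<le> l1norm f"
proof -
  assume "f \<in> l1"
  then have "infsum (\<lambda>i. norm (f i)) {k} \<le> infsum (\<lambda>i. norm (f i)) UNIV"
    by (intro infsum_mono_neutral) (auto simp: l1_def)
  then show ?thesis by (simp add: l1norm_def)
qed

lemma l1_delta: "delta p \<in> l1" "l1norm (delta p) = 1"
proof -
  have "(\<lambda>i. norm (delta p i)) summable_on UNIV \<and> infsum (\<lambda>i. norm (delta p i)) UNIV = 1"
  proof -
    have "infsum (\<lambda>i. norm (delta p i)) UNIV = infsum (\<lambda>i. norm (delta p i)) {p}"
      by (rule infsum_cong_neutral) (auto simp: delta_def)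
    moreover have "(\<lambda>i. norm (delta p i)) summable_on UNIV \<longleftrightarrow> (\<lambda>i. norm (delta p i)) summable_on {p}"
      by (rule summable_on_cong_neutral) (auto simp: delta_def)
    ultimately show ?thesis by (simp add: delta_def)
  qed
  then show "delta p \<in> l1" "l1norm (delta p) = 1" by (auto simp: l1_def l1norm_def)
qed

lemma infsum_single_point:
  fixes f :: "'a \<Rightarrow> 'b::{comm_monoid_add,t2_space}"
  assumes "\<And>x. x \<noteq> a \<Longrightarrow> f x = 0"
  shows "infsum f UNIV = f a"
proof -
  have "infsum f UNIV = infsum f {a}"
    by (rule infsum_cong_neutral) (use assms in auto)
  then show ?thesis by simp
qed

lemma l1_embed:
  assumes "inj h" "\<And>q. q \<notin> range h \<Longrightarrow> g q = 0"
  shows "g \<in> l1 \<longleftrightarrow> (g \<circ> h) \<in> l1" "l1norm g = l1norm (g \<circ> h)"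
proof -
  have a: "(\<lambda>q. norm (g q)) summable_on UNIV \<longleftrightarrow> (\<lambda>q. norm (g q)) summable_on range h"
    by (rule summable_on_cong_neutral) (use assms in auto)
  have b: "infsum (\<lambda>q. norm (g q)) UNIV = infsum (\<lambda>q. norm (g q)) (range h)"
    by (rule infsum_cong_neutral) (use assms in auto)
  show "g \<in> l1 \<longleftrightarrow> (g \<circ> h) \<in> l1"
    unfolding l1_def using a summable_on_reindex[OF assms(1), of "\<lambda>q. norm (g q)"]
    by (simp add: o_def)
  show "l1norm g = l1norm (g \<circ> h)"
    unfolding l1norm_def using b infsum_reindex[OF assms(1), of "\<lambda>q. norm (g q)"]
    by (simp add: o_def)
qed


lemma fsupp_add: "fsupp (\<lambda>q. u q + v q) \<subseteq> fsupp u \<union> fsupp v"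
  by (auto simp: fsupp_def)

lemma fsupp_diff: "fsupp (\<lambda>q. u q - v q) \<subseteq> fsupp u \<union> fsupp v"
  by (auto simp: fsupp_def)

lemma fsupp_scale: "fsupp (\<lambda>q. c * u q) \<subseteq> fsupp u"
  by (auto simp: fsupp_def)

lemma fsupp_delta: "fsupp (delta p) = {p}"
  by (auto simp: fsupp_def delta_def)

lemma fsupp_sum: "fsupp (\<lambda>q. \<Sum>g\<in>G. F g q) \<subseteq> (\<Union>g\<in>G. fsupp (F g))"
proof
  fix q assume "q \<in> fsupp (\<lambda>q. \<Sum>g\<in>G. F g q)"
  then have "(\<Sum>g\<in>G. F g q) \<noteq> 0" by (simp add: fsupp_def)
  then obtain g where "g \<in> G" "F g q \<noteq> 0" by (meson sum.neutral)
  then show "q \<in> (\<Union>g\<in>G. fsupp (F g))" by (auto simp: fsupp_def)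
qed

lemma finite_fsupp_sum: "finite G \<Longrightarrow> (\<And>g. g \<in> G \<Longrightarrow> finite (fsupp (F g))) \<Longrightarrow> finite (fsupp (\<lambda>q. \<Sum>g\<in>G. F g q))"
  by (rule finite_subset[OF fsupp_sum]) auto

lemma free_tensor_add: "u \<in> free_tensor X Y \<Longrightarrow> v \<in> free_tensor X Y \<Longrightarrow> (\<lambda>q. u q + v q) \<in> free_tensor X Y"
proof -
  assume a: "u \<in> free_tensor X Y" "v \<in> free_tensor X Y"
  have "finite (fsupp u \<union> fsupp v)" "fsupp u \<union> fsupp v \<subseteq> X \<times> Y" using a by (auto simp: free_tensor_def)
  moreover have "fsupp (\<lambda>q. u q + v q) \<subseteq> fsupp u \<union> fsupp v" by (rule fsupp_add)
  ultimately have "finite (fsupp (\<lambda>q. u q + v q))" "fsupp (\<lambda>q. u q + v q) \<subseteq> X \<times> Y"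
    by (auto dest: finite_subset)
  then show ?thesis unfolding free_tensor_def by blast
qed

lemma free_tensor_diff: "u \<in> free_tensor X Y \<Longrightarrow> v \<in> free_tensor X Y \<Longrightarrow> (\<lambda>q. u q - v q) \<in> free_tensor X Y"
proof -
  assume a: "u \<in> free_tensor X Y" "v \<in> free_tensor X Y"
  have "finite (fsupp u \<union> fsupp v)" "fsupp u \<union> fsupp v \<subseteq> X \<times> Y" using a by (auto simp: free_tensor_def)
  moreover have "fsupp (\<lambda>q. u q - v q) \<subseteq> fsupp u \<union> fsupp v" by (rule fsupp_diff)
  ultimately have "finite (fsupp (\<lambda>q. u q - v q))" "fsupp (\<lambda>q. u q - v q) \<subseteq> X \<times> Y"
    by (auto dest: finite_subset)
  then show ?thesis unfolding free_tensor_def by blast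
qed

lemma free_tensor_scale: "u \<in> free_tensor X Y \<Longrightarrow> (\<lambda>q. c * u q) \<in> free_tensor X Y"
proof -
  assume a: "u \<in> free_tensor X Y"
  have "finite (fsupp u)" "fsupp u \<subseteq> X \<times> Y" using a by (auto simp: free_tensor_def)
  moreover have "fsupp (\<lambda>q. c * u q) \<subseteq> fsupp u" by (rule fsupp_scale)
  ultimately have "finite (fsupp (\<lambda>q. c * u q))" "fsupp (\<lambda>q. c * u q) \<subseteq> X \<times> Y"
    by (auto dest: finite_subset)
  then show ?thesis unfolding free_tensor_def by blast
qed

lemma free_tensor_delta: "x \<in> X \<Longrightarrow> y \<in> Y \<Longrightarrow> delta (x, y) \<in> free_tensor X Y"
  unfolding free_tensor_def by (simp add: fsupp_delta)

lemma free_tensor_zero: "(\<lambda>q. 0) \<in> free_tensor X Y"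
  unfolding free_tensor_def by (simp add: fsupp_def)

lemma free_tensor_sum: "finite G \<Longrightarrow> (\<And>g. g \<in> G \<Longrightarrow> F g \<in> free_tensor X Y) \<Longrightarrow> (\<lambda>q. \<Sum>g\<in>G. F g q) \<in> free_tensor X Y"
proof (induction G rule: finite_induct)
  case empty then show ?case using free_tensor_zero by simp
next
  case (insert x G)
  have "(\<lambda>q. F x q + (\<Sum>g\<in>G. F g q)) \<in> free_tensor X Y"
    by (rule free_tensor_add) (use insert in auto)
  then show ?case using insert(1,2) by simp
qed

lemma free_tensor_repr:
  assumes "finite (fsupp u)"
  shows "u = (\<lambda>q. \<Sum>p\<in>fsupp u. u p * delta p q)"
proof
  fix q
  have "(\<Sum>p\<in>fsupp u. u p * delta p q) = (\<Sum>p\<in>fsupp u. if p = q then u q else 0)"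
    by (rule sum.cong) (auto simp: delta_def)
  also have "\<dots> = (if q \<in> fsupp u then u q else 0)" using assms by simp
  also have "\<dots> = u q" by (auto simp: fsupp_def)
  finally show "u q = (\<Sum>p\<in>fsupp u. u p * delta p q)" by simp
qed

lemma tmap_superset:
  assumes "finite S" "fsupp u \<subseteq> S"
  shows "tmap m u = (\<lambda>t. \<Sum>p\<in>S. u p * m (fst p) (snd p) t)"
  unfolding tmap_def
proof
  fix t show "(\<Sum>p\<in>fsupp u. u p * m (fst p) (snd p) t) = (\<Sum>p\<in>S. u p * m (fst p) (snd p) t)"
    by (rule sum.mono_neutral_left) (use assms in \<open>auto simp: fsupp_def\<close>)
qed

lemma tmap_add:
  assumes "finite (fsupp u)" "finite (fsupp v)"
  shows "tmap m (\<lambda>q. u q + v q) = (\<lambda>t. tmap m u t + tmap m v t)"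
proof -
  let ?S = "fsupp u \<union> fsupp v"
  have "tmap m (\<lambda>q. u q + v q) = (\<lambda>t. \<Sum>p\<in>?S. (u p + v p) * m (fst p) (snd p) t)"
    by (rule tmap_superset) (use assms fsupp_add[of u v] in auto)
  moreover have "tmap m u = (\<lambda>t. \<Sum>p\<in>?S. u p * m (fst p) (snd p) t)"
    by (rule tmap_superset) (use assms in auto)
  moreover have "tmap m v = (\<lambda>t. \<Sum>p\<in>?S. v p * m (fst p) (snd p) t)"
    by (rule tmap_superset) (use assms in auto)
  ultimately show ?thesis by (simp add: distrib_right sum.distrib)
qed

lemma tmap_scale:
  assumes "finite (fsupp u)"
  shows "tmap m (\<lambda>q. c * u q) = (\<lambda>t. c * tmap m u t)"
proof -
  have "tmap m (\<lambda>q. c * u q) = (\<lambda>t. \<Sum>p\<in>fsupp u. (c * u p) * m (fst p) (snd p) t)"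
    by (rule tmap_superset) (use assms fsupp_scale[of c u] in auto)
  then show ?thesis by (simp add: tmap_def sum_distrib_left mult.assoc)
qed

lemma tmap_diff:
  assumes "finite (fsupp u)" "finite (fsupp v)"
  shows "tmap m (\<lambda>q. u q - v q) = (\<lambda>t. tmap m u t - tmap m v t)"
proof -
  have f: "finite (fsupp (\<lambda>q. (-1) * v q))" using assms(2) fsupp_scale by (rule finite_subset[rotated])
  have "tmap m (\<lambda>q. u q - v q) = tmap m (\<lambda>q. u q + (-1) * v q)" by simp
  also have "\<dots> = (\<lambda>t. tmap m u t + tmap m (\<lambda>q. (-1) * v q) t)"
    by (rule tmap_add[OF assms(1) f])
  also have "\<dots> = (\<lambda>t. tmap m u t - tmap m v t)"
    using tmap_scale[OF assms(2), where c="-1" and m=m] by simp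
  finally show ?thesis .
qed

lemma tmap_delta: "tmap m (delta p) = m (fst p) (snd p)"
  unfolding tmap_def fsupp_delta by (simp add: delta_def)

lemma tmap_zero: "tmap m (\<lambda>q. 0) = (\<lambda>t. 0)"
  by (simp add: tmap_def fsupp_def)

lemma tmap_sum:
  assumes "finite G" "\<And>g. g \<in> G \<Longrightarrow> finite (fsupp (F g))"
  shows "tmap m (\<lambda>q. \<Sum>g\<in>G. F g q) = (\<lambda>t. \<Sum>g\<in>G. tmap m (F g) t)"
  using assms
proof (induction G rule: finite_induct)
  case empty then show ?case by (simp add: tmap_zero)
next
  case (insert x G)
  have "tmap m (\<lambda>q. \<Sum>g\<in>insert x G. F g q) = tmap m (\<lambda>q. F x q + (\<Sum>g\<in>G. F g q))"
    using insert by simp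
  also have "\<dots> = (\<lambda>t. tmap m (F x) t + tmap m (\<lambda>q. \<Sum>g\<in>G. F g q) t)"
    by (rule tmap_add) (use insert in \<open>auto intro: finite_fsupp_sum\<close>)
  finally show ?case using insert by simp
qed

definition cost :: "(('x \<Rightarrow> complex) \<times> ('y \<Rightarrow> complex) \<Rightarrow> complex) \<Rightarrow> real" where
  "cost v = (\<Sum>p\<in>fsupp v. norm (v p) * l1norm (fst p) * l1norm (snd p))"

lemma cost_superset:
  assumes "finite S" "fsupp u \<subseteq> S"
  shows "cost u = (\<Sum>p\<in>S. norm (u p) * l1norm (fst p) * l1norm (snd p))"
  unfolding cost_def
  by (rule sum.mono_neutral_left) (use assms in \<open>auto simp: fsupp_def\<close>)

lemma cost_nonneg: "cost u \<ge> 0"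
  unfolding cost_def by (intro sum_nonneg mult_nonneg_nonneg l1norm_nonneg norm_ge_zero)

lemma cost_add:
  assumes "finite (fsupp u)" "finite (fsupp v)"
  shows "cost (\<lambda>q. u q + v q) \<le> cost u + cost v"
proof -
  let ?S = "fsupp u \<union> fsupp v"
  have "cost (\<lambda>q. u q + v q) = (\<Sum>p\<in>?S. norm (u p + v p) * l1norm (fst p) * l1norm (snd p))"
    by (rule cost_superset) (use assms fsupp_add[of u v] in auto)
  also have "\<dots> \<le> (\<Sum>p\<in>?S. norm (u p) * l1norm (fst p) * l1norm (snd p) + norm (v p) * l1norm (fst p) * l1norm (snd p))"
    apply (rule sum_mono)
    by (metis distrib_right mult_right_mono norm_triangle_ineq l1norm_nonneg)
  also have "\<dots> = cost u + cost v"
    by (simp add: sum.distrib cost_superset[of ?S u] cost_superset[of ?S v] assms)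
  finally show ?thesis .
qed

lemma cost_scale:
  assumes "finite (fsupp u)"
  shows "cost (\<lambda>q. c * u q) = norm c * cost u"
proof -
  have "cost (\<lambda>q. c * u q) = (\<Sum>p\<in>fsupp u. norm (c * u p) * l1norm (fst p) * l1norm (snd p))"
    by (rule cost_superset) (use assms fsupp_scale[of c u] in auto)
  then show ?thesis by (simp add: cost_def sum_distrib_left norm_mult mult.assoc)
qed

lemma cost_delta: "cost (delta p) = l1norm (fst p) * l1norm (snd p)"
  unfolding cost_def fsupp_delta by (simp add: delta_def)

lemma cost_zero: "cost (\<lambda>q. 0) = 0"
  by (simp add: cost_def fsupp_def)

lemma cost_sum:
  assumes "finite G" "\<And>g. g \<in> G \<Longrightarrow> finite (fsupp (F g))"
  shows "cost (\<lambda>q. \<Sum>g\<in>G. F g q) \<le> (\<Sum>g\<in>G. cost (F g))"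
  using assms
proof (induction G rule: finite_induct)
  case empty then show ?case by (simp add: cost_zero)
next
  case (insert x G)
  have "cost (\<lambda>q. \<Sum>g\<in>insert x G. F g q) = cost (\<lambda>q. F x q + (\<Sum>g\<in>G. F g q))"
    using insert by simp
  also have "\<dots> \<le> cost (F x) + cost (\<lambda>q. \<Sum>g\<in>G. F g q)"
    by (rule cost_add) (use insert in \<open>auto intro: finite_fsupp_sum\<close>)
  finally show ?case using insert by simp
qed

lemma ls_zero: "(\<lambda>q. 0) \<in> lin_span S"
  unfolding lin_span_def by (intro CollectI exI[of _ "{}"] exI[of _ "\<lambda>_. 0"]) simp

lemma ls_base: "g \<in> S \<Longrightarrow> g \<in> lin_span S"
  unfolding lin_span_def by (intro CollectI exI[of _ "{g}"] exI[of _ "\<lambda>_. 1"]) simp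

lemma ls_add:
  assumes "u \<in> lin_span S" "v \<in> lin_span S"
  shows "(\<lambda>q. u q + v q) \<in> lin_span S"
proof -
  obtain G c where G: "finite G" "G \<subseteq> S" "u = (\<lambda>q. \<Sum>g\<in>G. c g * g q)"
    using assms(1) unfolding lin_span_def by blast
  obtain H d where H: "finite H" "H \<subseteq> S" "v = (\<lambda>q. \<Sum>g\<in>H. d g * g q)"
    using assms(2) unfolding lin_span_def by blast
  let ?e = "\<lambda>g. (if g \<in> G then c g else 0) + (if g \<in> H then d g else 0)"
  have "(\<lambda>q. u q + v q) = (\<lambda>q. \<Sum>g\<in>G \<union> H. ?e g * g q)"
  proof
    fix q
    have "(\<Sum>g\<in>G \<union> H. ?e g * g q) = (\<Sum>g\<in>G \<union> H. (if g \<in> G then c g * g q else 0)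
        + (if g \<in> H then d g * g q else 0))"
      by (rule sum.cong) (auto simp: distrib_right)
    also have "\<dots> = (\<Sum>g\<in>G \<union> H. (if g \<in> G then c g * g q else 0))
        + (\<Sum>g\<in>G \<union> H. (if g \<in> H then d g * g q else 0))"
      by (rule sum.distrib)
    also have "\<dots> = (\<Sum>g\<in>(G \<union> H) \<inter> G. c g * g q) + (\<Sum>g\<in>(G \<union> H) \<inter> H. d g * g q)"
      using G H by (simp only: sum.inter_restrict finite_Un)
    also have "(G \<union> H) \<inter> G = G" by auto
    also have "(G \<union> H) \<inter> H = H" by auto
    finally have "(\<Sum>g\<in>G \<union> H. ?e g * g q) = (\<Sum>g\<in>G. c g * g q) + (\<Sum>g\<in>H. d g * g q)" .
    moreover have "u q + v q = (\<Sum>g\<in>G. c g * g q) + (\<Sum>g\<in>H. d g * g q)"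
      by (simp only: G(3) H(3))
    ultimately show "u q + v q = (\<Sum>g\<in>G \<union> H. ?e g * g q)" by simp
  qed
  moreover have "finite (G \<union> H)" "G \<union> H \<subseteq> S" using G H by auto
  ultimately show ?thesis unfolding lin_span_def
    apply (intro CollectI exI[of _ "G \<union> H"] exI[of _ ?e])
    by (intro conjI; assumption)
qed

lemma ls_scale:
  assumes "u \<in> lin_span S"
  shows "(\<lambda>q. a * u q) \<in> lin_span S"
proof -
  obtain G c where G: "finite G" "G \<subseteq> S" "u = (\<lambda>q. \<Sum>g\<in>G. c g * g q)"
    using assms(1) unfolding lin_span_def by blast
  have "(\<lambda>q. a * u q) = (\<lambda>q. \<Sum>g\<in>G. (a * c g) * g q)"
    using G by (simp add: sum_distrib_left mult.assoc)
  then show ?thesis unfolding lin_span_def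
    apply (intro CollectI exI[of _ G] exI[of _ "\<lambda>g. a * c g"])
    using G(1,2) by blast
qed

lemma ls_diff: "u \<in> lin_span S \<Longrightarrow> v \<in> lin_span S \<Longrightarrow> (\<lambda>q. u q - v q) \<in> lin_span S"
  using ls_add[of u S "\<lambda>q. (-1) * v q"] ls_scale[of v S "-1"] by simp

lemma ls_sum: "finite G \<Longrightarrow> (\<And>g. g \<in> G \<Longrightarrow> F g \<in> lin_span S) \<Longrightarrow> (\<lambda>q. \<Sum>g\<in>G. F g q) \<in> lin_span S"
proof (induction G rule: finite_induct)
  case empty then show ?case by (simp add: ls_zero)
next
  case (insert x F) then show ?case by (simp add: ls_add)
qed

definition eqv where "eqv S u v \<longleftrightarrow> (\<lambda>q. u q - v q) \<in> lin_span S"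

lemma eqv_refl: "eqv S u u"
  unfolding eqv_def using ls_zero by simp

lemma eqv_sym: "eqv S u v \<Longrightarrow> eqv S v u"
proof -
  assume "eqv S u v"
  then have "(\<lambda>q. (-1) * (u q - v q)) \<in> lin_span S" unfolding eqv_def by (rule ls_scale)
  moreover have "(\<lambda>q. (-1) * (u q - v q)) = (\<lambda>q. v q - u q)" by auto
  ultimately show ?thesis unfolding eqv_def by simp
qed

lemma eqv_trans: "eqv S u v \<Longrightarrow> eqv S v w \<Longrightarrow> eqv S u w"
  unfolding eqv_def using ls_add[of "\<lambda>q. u q - v q" S "\<lambda>q. v q - w q"] by simp

lemma eqv_add:
  assumes "eqv S u u'" "eqv S v v'"
  shows "eqv S (\<lambda>q. u q + v q) (\<lambda>q. u' q + v' q)"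
proof -
  have "(\<lambda>q. (u q - u' q) + (v q - v' q)) \<in> lin_span S"
    using assms unfolding eqv_def by (rule ls_add)
  moreover have "(\<lambda>q. (u q - u' q) + (v q - v' q)) = (\<lambda>q. (u q + v q) - (u' q + v' q))"
    by (rule ext) (simp add: algebra_simps)
  ultimately show ?thesis unfolding eqv_def by simp
qed

lemma eqv_scale:
  assumes "eqv S u u'"
  shows "eqv S (\<lambda>q. c * u q) (\<lambda>q. c * u' q)"
proof -
  have "(\<lambda>q. c * (u q - u' q)) \<in> lin_span S"
    using assms unfolding eqv_def by (rule ls_scale)
  moreover have "(\<lambda>q. c * (u q - u' q)) = (\<lambda>q. c * u q - c * u' q)"
    by (rule ext) (simp add: algebra_simps)
  ultimately show ?thesis unfolding eqv_def by simp
qed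

lemma eqv_sum: "finite G \<Longrightarrow> (\<And>g. g \<in> G \<Longrightarrow> eqv S (F g) (F' g)) \<Longrightarrow>
   eqv S (\<lambda>q. \<Sum>g\<in>G. F g q) (\<lambda>q. \<Sum>g\<in>G. F' g q)"
proof (induction G rule: finite_induct)
  case empty then show ?case by (simp add: eqv_refl)
next
  case (insert x G)
  have "eqv S (\<lambda>q. F x q + (\<Sum>g\<in>G. F g q)) (\<lambda>q. F' x q + (\<Sum>g\<in>G. F' g q))"
    by (rule eqv_add) (use insert in auto)
  then show ?case using insert(1,2) by simp
qed

lemma eqv_cong: "eqv S u v \<Longrightarrow> u = u' \<Longrightarrow> v = v' \<Longrightarrow> eqv S u' v'"
  by simp


lemma l1norm_rev_tri:
  assumes "f \<in> l1" "g \<in> l1"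
  shows "\<bar>l1norm f - l1norm g\<bar> \<le> l1norm (\<lambda>t. f t - g t)"
proof -
  have "l1norm f \<le> l1norm (\<lambda>t. f t - g t) + l1norm g"
    using l1norm_add[OF l1_diff[OF assms] assms(2)] by simp
  moreover have "l1norm g \<le> l1norm (\<lambda>t. g t - f t) + l1norm f"
    using l1norm_add[OF l1_diff[OF assms(2,1)] assms(1)] by simp
  ultimately show ?thesis using l1norm_commute[of f g] by linarith
qed

lemma fsupp3: "fsupp (\<lambda>q. delta p1 q - delta p2 q - delta p3 q) \<subseteq> {p1, p2, p3}"
  by (auto simp: fsupp_def delta_def)

lemma fsupp2: "fsupp (\<lambda>q. delta p1 q - c * delta p2 q) \<subseteq> {p1, p2}"
  by (auto simp: fsupp_def delta_def)

lemma fsupp2': "fsupp (\<lambda>q. delta p1 q - delta p2 q) \<subseteq> {p1, p2}"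
  by (auto simp: fsupp_def delta_def)

lemma fin3: "finite (fsupp (\<lambda>q. delta p1 q - delta p2 q - delta p3 q))"
  by (rule finite_subset[OF fsupp3]) simp

lemma fin2: "finite (fsupp (\<lambda>q. delta p1 q - c * delta p2 q))"
  by (rule finite_subset[OF fsupp2]) simp

lemma fin2': "finite (fsupp (\<lambda>q. delta p1 q - delta p2 q))"
  by (rule finite_subset[OF fsupp2']) simp

lemma finite_fsupp_delta: "finite (fsupp (delta p))"
  by (simp add: fsupp_delta)

declare eqv_trans[trans]

locale tens =
  fixes Alg :: "'b set"
    and rX :: "('x \<Rightarrow> complex) \<Rightarrow> 'b \<Rightarrow> ('x \<Rightarrow> complex)"
    and lY :: "'b \<Rightarrow> ('y \<Rightarrow> complex) \<Rightarrow> ('y \<Rightarrow> complex)"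
    and m :: "('x \<Rightarrow> complex) \<Rightarrow> ('y \<Rightarrow> complex) \<Rightarrow> ('z \<Rightarrow> complex)"
  assumes m_l1: "x \<in> l1 \<Longrightarrow> y \<in> l1 \<Longrightarrow> m x y \<in> l1"
    and m_bound: "x \<in> l1 \<Longrightarrow> y \<in> l1 \<Longrightarrow> l1norm (m x y) \<le> l1norm x * l1norm y"
    and m_addL: "x \<in> l1 \<Longrightarrow> x' \<in> l1 \<Longrightarrow> y \<in> l1 \<Longrightarrow> m (\<lambda>t. x t + x' t) y = (\<lambda>t. m x y t + m x' y t)"
    and m_addR: "x \<in> l1 \<Longrightarrow> y \<in> l1 \<Longrightarrow> y' \<in> l1 \<Longrightarrow> m x (\<lambda>t. y t + y' t) = (\<lambda>t. m x y t + m x y' t)"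
    and m_scaleL: "x \<in> l1 \<Longrightarrow> y \<in> l1 \<Longrightarrow> m (\<lambda>t. c * x t) y = (\<lambda>t. c * m x y t)"
    and m_scaleR: "x \<in> l1 \<Longrightarrow> y \<in> l1 \<Longrightarrow> m x (\<lambda>t. c * y t) = (\<lambda>t. c * m x y t)"
    and m_bal: "x \<in> l1 \<Longrightarrow> b \<in> Alg \<Longrightarrow> y \<in> l1 \<Longrightarrow> m (rX x b) y = m x (lY b y)"
begin

abbreviation "R \<equiv> tensor_relations (l1::('x \<Rightarrow> complex) set) (l1::('y \<Rightarrow> complex) set) Alg rX lY"
abbreviation "FT \<equiv> free_tensor (l1::('x \<Rightarrow> complex) set) (l1::('y \<Rightarrow> complex) set)"
abbreviation "qn \<equiv> bal_seminorm (l1::('x \<Rightarrow> complex) set) l1norm (l1::('y \<Rightarrow> complex) set) l1norm Alg rX lY"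
abbreviation "E \<equiv> eqv R"

lemma rel_addL:
  assumes "a \<in> l1" "a' \<in> l1" "y \<in> l1"
  shows "E (delta (\<lambda>t. a t + a' t, y)) (\<lambda>q. delta (a, y) q + delta (a', y) q)"
proof -
  have "(\<lambda>q. delta (\<lambda>t. a t + a' t, y) q - delta (a, y) q - delta (a', y) q) \<in> R"
    unfolding tensor_relations_def using assms by blast
  then show ?thesis unfolding eqv_def by (auto dest: ls_base simp: diff_diff_eq)
qed

lemma rel_addR:
  assumes "a \<in> l1" "y \<in> l1" "y' \<in> l1"
  shows "E (delta (a, \<lambda>t. y t + y' t)) (\<lambda>q. delta (a, y) q + delta (a, y') q)"
proof -
  have "(\<lambda>q. delta (a, \<lambda>t. y t + y' t) q - delta (a, y) q - delta (a, y') q) \<in> R"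
    unfolding tensor_relations_def using assms by blast
  then show ?thesis unfolding eqv_def by (auto dest: ls_base simp: diff_diff_eq)
qed

lemma rel_scaleL:
  assumes "a \<in> l1" "y \<in> l1"
  shows "E (delta (\<lambda>t. c * a t, y)) (\<lambda>q. c * delta (a, y) q)"
proof -
  have "(\<lambda>q. delta (\<lambda>t. c * a t, y) q - c * delta (a, y) q) \<in> R"
    unfolding tensor_relations_def using assms by blast
  then show ?thesis unfolding eqv_def by (auto dest: ls_base)
qed

lemma rel_scaleR:
  assumes "a \<in> l1" "y \<in> l1"
  shows "E (delta (a, \<lambda>t. c * y t)) (\<lambda>q. c * delta (a, y) q)"
proof -
  have "(\<lambda>q. delta (a, \<lambda>t. c * y t) q - c * delta (a, y) q) \<in> R"
    unfolding tensor_relations_def using assms by blast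
  then show ?thesis unfolding eqv_def by (auto dest: ls_base)
qed

lemma rel_bal:
  assumes "a \<in> l1" "b \<in> Alg" "y \<in> l1"
  shows "E (delta (rX a b, y)) (delta (a, lY b y))"
proof -
  have "(\<lambda>q. delta (rX a b, y) q - delta (a, lY b y) q) \<in> R"
    unfolding tensor_relations_def using assms by blast
  then show ?thesis unfolding eqv_def by (auto dest: ls_base)
qed

lemma delta_zeroL: "y \<in> l1 \<Longrightarrow> E (delta ((\<lambda>t. 0), y)) (\<lambda>q. 0)"
  using rel_scaleL[of "\<lambda>t. 0" y 0] by simp

lemma delta_zeroR: "a \<in> l1 \<Longrightarrow> E (delta (a, (\<lambda>t. 0))) (\<lambda>q. 0)"
  using rel_scaleR[of a "\<lambda>t. 0" 0] by simp

lemma delta_sumL: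
  assumes "finite K" "\<And>k. k \<in> K \<Longrightarrow> f k \<in> l1" "y \<in> l1"
  shows "E (delta (\<lambda>t. \<Sum>k\<in>K. f k t, y)) (\<lambda>q. \<Sum>k\<in>K. delta (f k, y) q)"
  using assms(1,2)
proof (induction K rule: finite_induct)
  case empty then show ?case using delta_zeroL[OF assms(3)] by simp
next
  case (insert x K)
  have s: "(\<lambda>t. \<Sum>k\<in>K. f k t) \<in> l1" using insert by (intro l1_sum) auto
  have "E (delta (\<lambda>t. f x t + (\<Sum>k\<in>K. f k t), y)) (\<lambda>q. delta (f x, y) q + delta (\<lambda>t. \<Sum>k\<in>K. f k t, y) q)"
    by (rule rel_addL) (use insert s assms(3) in auto)
  also have "E \<dots> (\<lambda>q. delta (f x, y) q + (\<Sum>k\<in>K. delta (f k, y) q))"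
    by (rule eqv_add[OF eqv_refl]) (use insert in auto)
  finally show ?case using insert(1,2) by simp
qed

lemma delta_sumR:
  assumes "finite K" "\<And>k. k \<in> K \<Longrightarrow> f k \<in> l1" "a \<in> l1"
  shows "E (delta (a, \<lambda>t. \<Sum>k\<in>K. f k t)) (\<lambda>q. \<Sum>k\<in>K. delta (a, f k) q)"
  using assms(1,2)
proof (induction K rule: finite_induct)
  case empty then show ?case using delta_zeroR[OF assms(3)] by simp
next
  case (insert x K)
  have s: "(\<lambda>t. \<Sum>k\<in>K. f k t) \<in> l1" using insert by (intro l1_sum) auto
  have "E (delta (a, \<lambda>t. f x t + (\<Sum>k\<in>K. f k t))) (\<lambda>q. delta (a, f x) q + delta (a, \<lambda>t. \<Sum>k\<in>K. f k t) q)"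
    by (rule rel_addR) (use insert s assms(3) in auto)
  also have "E \<dots> (\<lambda>q. delta (a, f x) q + (\<Sum>k\<in>K. delta (a, f k) q))"
    by (rule eqv_add[OF eqv_refl]) (use insert in auto)
  finally show ?case using insert(1,2) by simp
qed

lemma lincombL:
  assumes "finite K" "\<And>k. k \<in> K \<Longrightarrow> f k \<in> l1" "y \<in> l1"
  shows "E (\<lambda>q. \<Sum>k\<in>K. c k * delta (f k, y) q) (delta (\<lambda>t. \<Sum>k\<in>K. c k * f k t, y))"
proof -
  have "E (delta (\<lambda>t. \<Sum>k\<in>K. c k * f k t, y)) (\<lambda>q. \<Sum>k\<in>K. delta (\<lambda>t. c k * f k t, y) q)"
    by (rule delta_sumL) (use assms in \<open>auto intro: l1_scale\<close>)
  also have "E \<dots> (\<lambda>q. \<Sum>k\<in>K. c k * delta (f k, y) q)"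
    by (rule eqv_sum[OF assms(1)]) (use assms in \<open>auto intro: rel_scaleL\<close>)
  finally show ?thesis by (rule eqv_sym)
qed

lemma lincombR:
  assumes "finite K" "\<And>k. k \<in> K \<Longrightarrow> f k \<in> l1" "a \<in> l1"
  shows "E (\<lambda>q. \<Sum>k\<in>K. c k * delta (a, f k) q) (delta (a, \<lambda>t. \<Sum>k\<in>K. c k * f k t))"
proof -
  have "E (delta (a, \<lambda>t. \<Sum>k\<in>K. c k * f k t)) (\<lambda>q. \<Sum>k\<in>K. delta (a, \<lambda>t. c k * f k t) q)"
    by (rule delta_sumR) (use assms in \<open>auto intro: l1_scale\<close>)
  also have "E \<dots> (\<lambda>q. \<Sum>k\<in>K. c k * delta (a, f k) q)"
    by (rule eqv_sum[OF assms(1)]) (use assms in \<open>auto intro: rel_scaleR\<close>)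
  finally show ?thesis by (rule eqv_sym)
qed

lemma rel_finite: "g \<in> R \<Longrightarrow> finite (fsupp g)"
  unfolding tensor_relations_def
  by (elim UnE CollectE exE conjE) (simp_all add: fin3 fin2 fin2')

lemma tmap_diff3:
  "tmap m (\<lambda>q. delta p1 q - delta p2 q - delta p3 q) = (\<lambda>t. m (fst p1) (snd p1) t - m (fst p2) (snd p2) t - m (fst p3) (snd p3) t)"
proof -
  have f: "finite (fsupp (\<lambda>q. delta p1 q - delta p2 q))" by (rule finite_subset[OF fsupp2']) simp
  show ?thesis
    by (simp add: tmap_diff[OF f finite_fsupp_delta] tmap_diff[OF finite_fsupp_delta finite_fsupp_delta] tmap_delta)
qed

lemma tmap_diff2:
  "tmap m (\<lambda>q. delta p1 q - c * delta p2 q) = (\<lambda>t. m (fst p1) (snd p1) t - c * m (fst p2) (snd p2) t)"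
proof -
  have f: "finite (fsupp (\<lambda>q. c * delta p2 q))" by (rule finite_subset[OF fsupp_scale]) (simp add: fsupp_delta)
  show ?thesis
    by (simp add: tmap_diff[OF finite_fsupp_delta f] tmap_scale[OF finite_fsupp_delta] tmap_delta)
qed

lemma tmap_diff2':
  "tmap m (\<lambda>q. delta p1 q - delta p2 q) = (\<lambda>t. m (fst p1) (snd p1) t - m (fst p2) (snd p2) t)"
  by (simp add: tmap_diff[OF finite_fsupp_delta finite_fsupp_delta] tmap_delta)

lemma tmap_rel: "g \<in> R \<Longrightarrow> tmap m g = (\<lambda>t. 0)"
  unfolding tensor_relations_def
  by (elim UnE CollectE exE conjE) (simp_all add: tmap_diff3 tmap_diff2 tmap_diff2' m_addL m_addR m_scaleL m_scaleR m_bal)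

lemma ls_R: "g \<in> lin_span R \<Longrightarrow> finite (fsupp g) \<and> tmap m g = (\<lambda>t. 0)"
proof -
  assume "g \<in> lin_span R"
  then obtain G c where G: "finite G" "G \<subseteq> R" "g = (\<lambda>q. \<Sum>h\<in>G. c h * h q)"
    unfolding lin_span_def by blast
  have hR: "\<And>h. h \<in> G \<Longrightarrow> h \<in> R" using G(2) by blast
  have fin: "\<And>h. h \<in> G \<Longrightarrow> finite (fsupp (\<lambda>q. c h * h q))"
    by (rule finite_subset[OF fsupp_scale rel_finite[OF hR]])
  have z: "tmap m (\<lambda>q. c h * h q) = (\<lambda>t. 0)" if "h \<in> G" for h
    using tmap_scale[OF rel_finite[OF hR[OF that]], of m "c h"] tmap_rel[OF hR[OF that]] by simp
  have "tmap m g = (\<lambda>t. \<Sum>h\<in>G. tmap m (\<lambda>q. c h * h q) t)"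
    unfolding G(3) by (rule tmap_sum[OF G(1) fin])
  also have "\<dots> = (\<lambda>t. 0)" using z by simp
  finally have "tmap m g = (\<lambda>t. 0)" .
  moreover have "finite (fsupp g)" unfolding G(3) by (rule finite_fsupp_sum[OF G(1) fin])
  ultimately show ?thesis by simp
qed

lemma E_tmap:
  assumes "finite (fsupp u)" "E u v"
  shows "tmap m u = tmap m v"
proof -
  have d: "finite (fsupp (\<lambda>q. u q - v q))" "tmap m (\<lambda>q. u q - v q) = (\<lambda>t. 0)"
    using ls_R assms(2) unfolding eqv_def by auto
  have "fsupp v \<subseteq> fsupp u \<union> fsupp (\<lambda>q. u q - v q)" by (auto simp: fsupp_def)
  then have fv: "finite (fsupp v)" using assms(1) d(1) by (rule finite_subset[OF _ finite_UnI])
  have e: "(\<lambda>t. tmap m u t - tmap m v t) = (\<lambda>t. 0)" using d(2) tmap_diff[OF assms(1) fv, of m] by simp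
  show ?thesis
  proof
    fix t show "tmap m u t = tmap m v t" using fun_cong[OF e, of t] by simp
  qed
qed

lemma FT_fin: "u \<in> FT \<Longrightarrow> finite (fsupp u)"
  by (simp add: free_tensor_def)

lemma FT_sub: "u \<in> FT \<Longrightarrow> p \<in> fsupp u \<Longrightarrow> fst p \<in> l1 \<and> snd p \<in> l1"
  by (auto simp: free_tensor_def)

lemma FT_subD1: "u \<in> FT \<Longrightarrow> (a, b) \<in> fsupp u \<Longrightarrow> a \<in> l1"
  by (auto simp: free_tensor_def)

lemma FT_subD2: "u \<in> FT \<Longrightarrow> (a, b) \<in> fsupp u \<Longrightarrow> b \<in> l1"
  by (auto simp: free_tensor_def)

lemma tmap_l1: "u \<in> FT \<Longrightarrow> tmap m u \<in> l1"
  unfolding tmap_def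
  by (rule l1_sum) (auto simp: FT_fin intro!: l1_scale m_l1 intro: FT_subD1 FT_subD2)

lemma tmap_bound: "u \<in> FT \<Longrightarrow> l1norm (tmap m u) \<le> cost u"
proof -
  assume u: "u \<in> FT"
  have "l1norm (tmap m u) \<le> (\<Sum>p\<in>fsupp u. l1norm (\<lambda>t. u p * m (fst p) (snd p) t))"
    unfolding tmap_def by (rule l1norm_sum) (auto simp: u FT_fin intro!: l1_scale m_l1 intro: FT_subD1[OF u] FT_subD2[OF u])
  also have "\<dots> \<le> cost u"
    unfolding cost_def l1norm_scale
    by (rule sum_mono) (auto simp: mult.assoc intro!: mult_left_mono m_bound intro: FT_subD1[OF u] FT_subD2[OF u])
  finally show ?thesis .
qed

lemma qn_def': "qn u = Inf {cost v | v. v \<in> FT \<and> E u v}"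
  by (simp add: bal_seminorm_def cost_def eqv_def)

lemma qn_ge: "u \<in> FT \<Longrightarrow> l1norm (tmap m u) \<le> qn u"
  unfolding qn_def'
proof (rule cInf_greatest)
  assume u: "u \<in> FT"
  show "{cost v | v. v \<in> FT \<and> E u v} \<noteq> {}" using u eqv_refl by blast
  fix x assume "x \<in> {cost v | v. v \<in> FT \<and> E u v}"
  then obtain v where v: "x = cost v" "v \<in> FT" "E u v" by blast
  have "tmap m u = tmap m v" using E_tmap[OF FT_fin[OF u] v(3)] .
  then show "l1norm (tmap m u) \<le> x" using tmap_bound[OF v(2)] v(1) by simp
qed

lemma qn_le: "v \<in> FT \<Longrightarrow> E u v \<Longrightarrow> qn u \<le> cost v"
  unfolding qn_def'
  by (rule cInf_lower) (auto intro: cost_nonneg)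

lemma qn_eq:
  assumes approx: "\<And>u e. u \<in> FT \<Longrightarrow> e > 0 \<Longrightarrow> \<exists>v\<in>FT. E u v \<and> cost v \<le> l1norm (tmap m u) + e"
  assumes u: "u \<in> FT"
  shows "qn u = l1norm (tmap m u)"
proof (rule antisym)
  show "qn u \<le> l1norm (tmap m u)"
  proof (rule field_le_epsilon)
    fix e :: real assume "e > 0"
    then obtain v where "v \<in> FT" "E u v" "cost v \<le> l1norm (tmap m u) + e" using approx u by blast
    then show "qn u \<le> l1norm (tmap m u) + e" using qn_le by fastforce
  qed
  show "l1norm (tmap m u) \<le> qn u" by (rule qn_ge[OF u])
qed

end

lemma inv_Suc_mono: "N \<le> k \<Longrightarrow> inverse (real (Suc k)) \<le> inverse (real (Suc N))"
  by (rule le_imp_inverse_le) auto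

context tens begin

lemma induced:
  assumes approx: "\<And>u e. u \<in> FT \<Longrightarrow> e > 0 \<Longrightarrow> \<exists>v\<in>FT. E u v \<and> cost v \<le> l1norm (tmap m u) + e"
    and dense: "\<And>z e. z \<in> l1 \<Longrightarrow> e > 0 \<Longrightarrow> \<exists>u\<in>FT. l1norm (\<lambda>t. tmap m u t - z t) < e"
  shows "induced_iso l1 l1norm l1 l1norm Alg rX lY m l1 l1norm"
proof -
  have qeq: "qn u = l1norm (tmap m u)" if "u \<in> FT" for u
    using qn_eq[OF approx that] by blast
  have qdiff: "qn (\<lambda>p. s p - s' p) = l1norm (\<lambda>t. tmap m s t - tmap m s' t)" if "s \<in> FT" "s' \<in> FT" for s s'
    using qeq[OF free_tensor_diff[OF that]] tmap_diff[OF FT_fin[OF that(1)] FT_fin[OF that(2)], of m] by simp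
  have tri: "qn (\<lambda>p. s p - s' p) \<le> l1norm (\<lambda>t. tmap m s t - z t) + l1norm (\<lambda>t. tmap m s' t - z t)"
    if "s \<in> FT" "s' \<in> FT" "z \<in> l1" for s s' z
    using qdiff[OF that(1,2)] l1norm_tri[OF tmap_l1[OF that(1)] that(3) tmap_l1[OF that(2)]]
      l1norm_commute[of z "tmap m s'"] by simp
  show ?thesis
    unfolding induced_iso_def Let_def
  proof (intro conjI)
    show "\<forall>u\<in>FT. tmap m u \<in> l1" using tmap_l1 by blast
    show "\<exists>C. \<forall>u\<in>FT. l1norm (tmap m u) \<le> C * qn u"
      by (rule exI[of _ 1]) (simp add: qn_ge)
    show "\<forall>z\<in>l1. \<exists>s. ((\<forall>n. s n \<in> FT) \<and> (\<forall>e>0. \<exists>N. \<forall>k\<ge>N. \<forall>n\<ge>N. qn (\<lambda>p. s k p - s n p) < e)) \<and>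
           (\<lambda>n. l1norm (\<lambda>t. tmap m (s n) t - z t)) \<longlonglongrightarrow> 0"
    proof
      fix z :: "'z \<Rightarrow> complex" assume z: "z \<in> l1"
      have "\<forall>n. \<exists>u. u \<in> FT \<and> l1norm (\<lambda>t. tmap m u t - z t) < inverse (real (Suc n))"
        using dense[OF z] by (meson inverse_positive_iff_positive of_nat_0_less_iff zero_less_Suc)
      then obtain s where s: "\<And>n. s n \<in> FT" "\<And>n. l1norm (\<lambda>t. tmap m (s n) t - z t) < inverse (real (Suc n))"
        using choice[of "\<lambda>n u. u \<in> FT \<and> l1norm (\<lambda>t. tmap m u t - z t) < inverse (real (Suc n))"] by blast
      have conv: "(\<lambda>n. l1norm (\<lambda>t. tmap m (s n) t - z t)) \<longlonglongrightarrow> 0"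
        apply (rule real_tendsto_sandwich[OF always_eventually always_eventually tendsto_const LIMSEQ_inverse_real_of_nat])
        using s(2) less_imp_le l1norm_nonneg by blast+
      have cauchy: "\<forall>e>0. \<exists>N. \<forall>k\<ge>N. \<forall>n\<ge>N. qn (\<lambda>p. s k p - s n p) < e"
      proof (intro allI impI)
        fix e :: real assume "e > 0"
        then obtain N where N: "inverse (real (Suc N)) < e / 2" using reals_Archimedean[of "e/2"] by auto
        show "\<exists>N. \<forall>k\<ge>N. \<forall>n\<ge>N. qn (\<lambda>p. s k p - s n p) < e"
        proof (intro exI allI impI)
          fix k n assume "N \<le> k" "N \<le> n"
          have "qn (\<lambda>p. s k p - s n p) \<le> l1norm (\<lambda>t. tmap m (s k) t - z t) + l1norm (\<lambda>t. tmap m (s n) t - z t)"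
            by (rule tri[OF s(1) s(1) z])
          also have "\<dots> < inverse (real (Suc k)) + inverse (real (Suc n))"
            using s(2)[of k] s(2)[of n] by simp
          also have "\<dots> \<le> inverse (real (Suc N)) + inverse (real (Suc N))"
            using inv_Suc_mono[OF \<open>N \<le> k\<close>] inv_Suc_mono[OF \<open>N \<le> n\<close>] by (rule add_mono)
          also have "\<dots> < e" using N by simp
          finally show "qn (\<lambda>p. s k p - s n p) < e" .
        qed
      qed
      show "\<exists>s. ((\<forall>n. s n \<in> FT) \<and> (\<forall>e>0. \<exists>N. \<forall>k\<ge>N. \<forall>n\<ge>N. qn (\<lambda>p. s k p - s n p) < e)) \<and>
           (\<lambda>n. l1norm (\<lambda>t. tmap m (s n) t - z t)) \<longlonglongrightarrow> 0"
        using s(1) cauchy conv by blast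
    qed
    show "\<forall>s s' z. ((\<forall>n. s n \<in> FT) \<and> (\<forall>e>0. \<exists>N. \<forall>k\<ge>N. \<forall>n\<ge>N. qn (\<lambda>p. s k p - s n p) < e)) \<and>
        ((\<forall>n. s' n \<in> FT) \<and> (\<forall>e>0. \<exists>N. \<forall>k\<ge>N. \<forall>n\<ge>N. qn (\<lambda>p. s' k p - s' n p) < e)) \<and>
        z \<in> l1 \<and> (\<lambda>n. l1norm (\<lambda>t. tmap m (s n) t - z t)) \<longlonglongrightarrow> 0 \<and>
        (\<lambda>n. l1norm (\<lambda>t. tmap m (s' n) t - z t)) \<longlonglongrightarrow> 0 \<longrightarrow>
        (\<lambda>n. qn (\<lambda>p. s n p - s' n p)) \<longlonglongrightarrow> 0"
    proof (intro allI impI)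
      fix s s' :: "nat \<Rightarrow> ('x \<Rightarrow> complex) \<times> ('y \<Rightarrow> complex) \<Rightarrow> complex" and z
      assume a: "((\<forall>n. s n \<in> FT) \<and> (\<forall>e>0. \<exists>N. \<forall>k\<ge>N. \<forall>n\<ge>N. qn (\<lambda>p. s k p - s n p) < e)) \<and>
        ((\<forall>n. s' n \<in> FT) \<and> (\<forall>e>0. \<exists>N. \<forall>k\<ge>N. \<forall>n\<ge>N. qn (\<lambda>p. s' k p - s' n p) < e)) \<and>
        z \<in> l1 \<and> (\<lambda>n. l1norm (\<lambda>t. tmap m (s n) t - z t)) \<longlonglongrightarrow> 0 \<and>
        (\<lambda>n. l1norm (\<lambda>t. tmap m (s' n) t - z t)) \<longlonglongrightarrow> 0"
      have "(\<lambda>n. l1norm (\<lambda>t. tmap m (s n) t - z t) + l1norm (\<lambda>t. tmap m (s' n) t - z t)) \<longlonglongrightarrow> 0 + 0"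
        using a by (intro tendsto_add) auto
      then have lim: "(\<lambda>n. l1norm (\<lambda>t. tmap m (s n) t - z t) + l1norm (\<lambda>t. tmap m (s' n) t - z t)) \<longlonglongrightarrow> 0"
        by simp
      have mem: "s n \<in> FT" "s' n \<in> FT" "z \<in> l1" for n using a by auto
      have le: "\<forall>n. qn (\<lambda>p. s n p - s' n p) \<le> l1norm (\<lambda>t. tmap m (s n) t - z t) + l1norm (\<lambda>t. tmap m (s' n) t - z t)"
        using tri[OF mem] by blast
      have ge: "\<forall>n. 0 \<le> qn (\<lambda>p. s n p - s' n p)"
        using qdiff[OF mem(1,2)] l1norm_nonneg by metis
      show "(\<lambda>n. qn (\<lambda>p. s n p - s' n p)) \<longlonglongrightarrow> 0"
        by (rule real_tendsto_sandwich[OF always_eventually[OF ge] always_eventually[OF le] tendsto_const lim])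
    qed
    show "\<exists>C. \<forall>s z. ((\<forall>n. s n \<in> FT) \<and> (\<forall>e>0. \<exists>N. \<forall>k\<ge>N. \<forall>n\<ge>N. qn (\<lambda>p. s k p - s n p) < e)) \<and>
       z \<in> l1 \<and> (\<lambda>n. l1norm (\<lambda>t. tmap m (s n) t - z t)) \<longlonglongrightarrow> 0 \<longrightarrow>
       lim (\<lambda>n. qn (s n)) \<le> C * l1norm z"
    proof (intro exI[of _ 1] allI impI)
      fix s :: "nat \<Rightarrow> ('x \<Rightarrow> complex) \<times> ('y \<Rightarrow> complex) \<Rightarrow> complex" and z
      assume a: "((\<forall>n. s n \<in> FT) \<and> (\<forall>e>0. \<exists>N. \<forall>k\<ge>N. \<forall>n\<ge>N. qn (\<lambda>p. s k p - s n p) < e)) \<and>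
       z \<in> l1 \<and> (\<lambda>n. l1norm (\<lambda>t. tmap m (s n) t - z t)) \<longlonglongrightarrow> 0"
      have mem: "s n \<in> FT" "z \<in> l1" for n using a by auto
      have b: "\<forall>n. norm (qn (s n) - l1norm z) \<le> l1norm (\<lambda>t. tmap m (s n) t - z t)"
        using qeq[OF mem(1)] l1norm_rev_tri[OF tmap_l1[OF mem(1)] mem(2)] by (simp add: real_norm_def)
      have c: "(\<lambda>n. l1norm (\<lambda>t. tmap m (s n) t - z t)) \<longlonglongrightarrow> 0" using a by blast
      have "(\<lambda>n. qn (s n) - l1norm z) \<longlonglongrightarrow> 0"
        by (rule Lim_null_comparison[OF always_eventually[OF b] c])
      then have "(\<lambda>n. qn (s n)) \<longlonglongrightarrow> l1norm z" by (simp add: LIM_zero_iff)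
      then show "lim (\<lambda>n. qn (s n)) \<le> 1 * l1norm z" by (simp add: limI)
    qed
  qed
qed

end

lemma l1_comparison':
  assumes "g summable_on UNIV" "\<And>i. norm (f i) \<le> g i"
  shows "f \<in> l1" "l1norm f \<le> infsum g UNIV"
proof -
  have "(\<lambda>i. norm (f i)) summable_on UNIV"
    by (rule summable_on_comparison_test[OF assms(1)]) (use assms(2) in auto)
  then show "f \<in> l1" by (simp add: l1_def)
  then show "l1norm f \<le> infsum g UNIV" unfolding l1norm_def
    by (intro infsum_mono) (use assms in \<open>auto simp: l1_def\<close>)
qed

lemma norm_infsum_l1: "f \<in> l1 \<Longrightarrow> norm (infsum f UNIV) \<le> l1norm f"
  unfolding l1norm_def l1_def by (intro norm_infsum_bound) simp

lemma l1_rows: "a \<in> l1 \<Longrightarrow> (\<lambda>k. a (i, k)) \<in> l1"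
proof -
  assume "a \<in> l1"
  then have "(\<lambda>q. norm (a q)) summable_on range (Pair i)"
    unfolding l1_def by (auto intro: summable_on_subset_banach)
  then have "((\<lambda>q. norm (a q)) \<circ> Pair i) summable_on UNIV"
    by (subst summable_on_reindex[symmetric]) (auto simp: inj_on_def)
  then show ?thesis by (simp add: l1_def o_def)
qed

lemma l1_swap: "a \<in> l1 \<longleftrightarrow> (\<lambda>(k, j). a (j, k)) \<in> l1" "l1norm a = l1norm (\<lambda>(k, j). a (j, k))"
proof -
  have *: "(\<lambda>(k, j). a (j, k)) = a \<circ> prod.swap" by auto
  show "a \<in> l1 \<longleftrightarrow> (\<lambda>(k, j). a (j, k)) \<in> l1" unfolding *
    by (rule l1_embed) (auto simp: inj_on_def)
  show "l1norm a = l1norm (\<lambda>(k, j). a (j, k))" unfolding *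
    by (rule l1_embed) (auto simp: inj_on_def)
qed

lemma l1_cols: "a \<in> l1 \<Longrightarrow> (\<lambda>k. a (k, j)) \<in> l1"
proof -
  assume "a \<in> l1"
  then have "(\<lambda>(k, j). a (j, k)) \<in> l1" using l1_swap(1)[of a] by blast
  from l1_rows[OF this, of j] show ?thesis by simp
qed

lemma l1_rows_sum:
  assumes "a \<in> l1"
  shows "(\<lambda>i. l1norm (\<lambda>k. a (i, k))) summable_on UNIV" "l1norm a = infsum (\<lambda>i. l1norm (\<lambda>k. a (i, k))) UNIV"
proof -
  have s: "(\<lambda>q. norm (a q)) summable_on Sigma UNIV (\<lambda>_. UNIV)" using assms by (simp add: l1_def)
  from Infinite_Sum.abs_summable_on_Sigma_iff[THEN iffD1, OF s]
  have "(\<lambda>x. norm (infsum (\<lambda>y. norm (a (x, y))) UNIV)) summable_on UNIV" by blast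
  then show "(\<lambda>i. l1norm (\<lambda>k. a (i, k))) summable_on UNIV"
    by (simp add: l1norm_def infsum_nonneg)
  have "infsum (\<lambda>x. infsum (\<lambda>y. norm (a (x, y))) UNIV) UNIV = infsum (\<lambda>q. norm (a q)) (Sigma UNIV (\<lambda>_. UNIV))"
    by (rule infsum_Sigma_banach) (use assms in \<open>simp add: l1_def\<close>)
  then show "l1norm a = infsum (\<lambda>i. l1norm (\<lambda>k. a (i, k))) UNIV"
    by (simp add: l1norm_def)
qed

lemma l1_cols_sum:
  assumes "a \<in> l1"
  shows "(\<lambda>j. l1norm (\<lambda>k. a (k, j))) summable_on UNIV" "l1norm a = infsum (\<lambda>j. l1norm (\<lambda>k. a (k, j))) UNIV"
proof -
  have s: "(\<lambda>(k, j). a (j, k)) \<in> l1" using l1_swap(1)[of a] assms by blast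
  show "(\<lambda>j. l1norm (\<lambda>k. a (k, j))) summable_on UNIV" using l1_rows_sum(1)[OF s] by simp
  show "l1norm a = infsum (\<lambda>j. l1norm (\<lambda>k. a (k, j))) UNIV"
    using l1_rows_sum(2)[OF s] l1_swap(2)[of a] by simp
qed

lemma l1_of_rows:
  assumes "\<And>i. (\<lambda>k. a (i, k)) \<in> l1" "(\<lambda>i. l1norm (\<lambda>k. a (i, k))) summable_on UNIV"
  shows "a \<in> l1" "l1norm a = infsum (\<lambda>i. l1norm (\<lambda>k. a (i, k))) UNIV"
proof -
  have "(\<lambda>q. norm (a q)) summable_on Sigma UNIV (\<lambda>_. UNIV)"
    by (rule Infinite_Sum.abs_summable_on_Sigma_iff[THEN iffD2])
       (use assms in \<open>auto simp: l1_def l1norm_def infsum_nonneg\<close>)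
  then show "a \<in> l1" by (simp add: l1_def)
  then show "l1norm a = infsum (\<lambda>i. l1norm (\<lambda>k. a (i, k))) UNIV" by (rule l1_rows_sum)
qed

lemma prod_l1:
  assumes "u \<in> l1" "\<And>k. norm (v k) \<le> C"
  shows "(\<lambda>k. u k * v k) \<in> l1" "l1norm (\<lambda>k. u k * v k) \<le> C * l1norm u"
proof -
  have "norm (u k * v k) \<le> C * norm (u k)" for k
    using assms(2)[of k] unfolding norm_mult by (metis mult.commute mult_right_mono norm_ge_zero)
  then show "(\<lambda>k. u k * v k) \<in> l1" "l1norm (\<lambda>k. u k * v k) \<le> C * l1norm u"
    using l1_comparison[OF assms(1), of "\<lambda>k. u k * v k" C] by auto
qed

lemma prod_summ: "u \<in> l1 \<Longrightarrow> v \<in> l1 \<Longrightarrow> (\<lambda>k. u k * v k) summable_on UNIV"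
proof -
  assume u: "u \<in> l1" and v: "v \<in> l1"
  have "\<And>k. norm (v k) \<le> l1norm v" using l1_le_norm[OF v] .
  from prod_l1(1)[OF u this] show ?thesis by (rule l1_summable)
qed

lemma prod_bound: "u \<in> l1 \<Longrightarrow> v \<in> l1 \<Longrightarrow> norm (infsum (\<lambda>k. u k * v k) UNIV) \<le> l1norm v * l1norm u"
proof -
  assume u: "u \<in> l1" and v: "v \<in> l1"
  have b: "\<And>k. norm (v k) \<le> l1norm v" using l1_le_norm[OF v] .
  have "norm (infsum (\<lambda>k. u k * v k) UNIV) \<le> l1norm (\<lambda>k. u k * v k)"
    by (rule norm_infsum_l1[OF prod_l1(1)[OF u b]])
  also have "\<dots> \<le> l1norm v * l1norm u" by (rule prod_l1(2)[OF u b])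
  finally show ?thesis .
qed


lemma M_lact_app: "M_lact a y i = infsum (\<lambda>k. a (i, k) * y k) UNIV"
  by (simp add: M_lact_def)
lemma M_ract_app: "M_ract x a j = infsum (\<lambda>k. x k * a (k, j)) UNIV"
  by (simp add: M_ract_def)
lemma M_mult_app: "M_mult a b (i, j) = infsum (\<lambda>k. a (i, k) * b (k, j)) UNIV"
  by (simp add: M_mult_def)

lemma M_lact_l1:
  assumes a: "a \<in> l1" and y: "y \<in> l1"
  shows "M_lact a y \<in> l1" "l1norm (M_lact a y) \<le> l1norm a * l1norm y"
proof -
  have b: "norm (M_lact a y i) \<le> l1norm y * l1norm (\<lambda>k. a (i, k))" for i
    unfolding M_lact_app by (rule prod_bound[OF l1_rows[OF a] y])
  have s: "(\<lambda>i. l1norm y * l1norm (\<lambda>k. a (i, k))) summable_on UNIV"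
    by (rule summable_on_cmult_right[OF l1_rows_sum(1)[OF a]])
  have e: "infsum (\<lambda>i. l1norm y * l1norm (\<lambda>k. a (i, k))) UNIV = l1norm a * l1norm y"
    using infsum_cmult_right'[where c="l1norm y" and f="\<lambda>i. l1norm (\<lambda>k. a (i, k))" and A=UNIV] l1_rows_sum(2)[OF a] by simp
  show "M_lact a y \<in> l1" "l1norm (M_lact a y) \<le> l1norm a * l1norm y"
    using l1_comparison'[OF s b] e by auto
qed

lemma M_ract_l1:
  assumes x: "x \<in> l1" and a: "a \<in> l1"
  shows "M_ract x a \<in> l1" "l1norm (M_ract x a) \<le> l1norm x * l1norm a"
proof -
  have b: "norm (M_ract x a j) \<le> l1norm x * l1norm (\<lambda>k. a (k, j))" for j
  proof -
    have "M_ract x a j = infsum (\<lambda>k. a (k, j) * x k) UNIV" unfolding M_ract_app by (simp add: mult.commute)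
    then show ?thesis using prod_bound[OF l1_cols[OF a] x] by simp
  qed
  have s: "(\<lambda>j. l1norm x * l1norm (\<lambda>k. a (k, j))) summable_on UNIV"
    by (rule summable_on_cmult_right[OF l1_cols_sum(1)[OF a]])
  have e: "infsum (\<lambda>j. l1norm x * l1norm (\<lambda>k. a (k, j))) UNIV = l1norm x * l1norm a"
    using infsum_cmult_right'[where c="l1norm x" and f="\<lambda>j. l1norm (\<lambda>k. a (k, j))" and A=UNIV] l1_cols_sum(2)[OF a] by simp
  show "M_ract x a \<in> l1" "l1norm (M_ract x a) \<le> l1norm x * l1norm a"
    using l1_comparison'[OF s b] e by auto
qed

lemma M_mult_row: "(\<lambda>j. M_mult a b (i, j)) = M_ract (\<lambda>k. a (i, k)) b"
  by (simp add: M_mult_def M_ract_def)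

lemma M_mult_l1:
  assumes a: "a \<in> l1" and b: "b \<in> l1"
  shows "M_mult a b \<in> l1" "l1norm (M_mult a b) \<le> l1norm a * l1norm b"
proof -
  have r: "(\<lambda>j. M_mult a b (i, j)) \<in> l1" for i
    unfolding M_mult_row by (rule M_ract_l1(1)[OF l1_rows[OF a] b])
  have rb: "l1norm (\<lambda>j. M_mult a b (i, j)) \<le> l1norm (\<lambda>k. a (i, k)) * l1norm b" for i
    unfolding M_mult_row by (rule M_ract_l1(2)[OF l1_rows[OF a] b])
  have s: "(\<lambda>i. l1norm (\<lambda>k. a (i, k)) * l1norm b) summable_on UNIV"
    by (rule summable_on_cmult_left[OF l1_rows_sum(1)[OF a]])
  have s2: "(\<lambda>i. l1norm (\<lambda>j. M_mult a b (i, j))) summable_on UNIV"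
    by (rule summable_on_comparison_test[OF s]) (use rb in \<open>auto simp: l1norm_nonneg\<close>)
  show m: "M_mult a b \<in> l1" by (rule l1_of_rows(1)[OF r s2])
  have "l1norm (M_mult a b) = infsum (\<lambda>i. l1norm (\<lambda>j. M_mult a b (i, j))) UNIV"
    by (rule l1_of_rows(2)[OF r s2])
  also have "\<dots> \<le> infsum (\<lambda>i. l1norm (\<lambda>k. a (i, k)) * l1norm b) UNIV"
    by (rule infsum_mono[OF s2 s rb])
  also have "\<dots> = l1norm a * l1norm b"
    using infsum_cmult_left'[where f="\<lambda>i. l1norm (\<lambda>k. a (i, k))" and A=UNIV and c="l1norm b"] l1_rows_sum(2)[OF a] by simp
  finally show "l1norm (M_mult a b) \<le> l1norm a * l1norm b" .
qed

lemma M_lact_addL: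
  assumes "a \<in> l1" "a' \<in> l1" "y \<in> l1"
  shows "M_lact (\<lambda>t. a t + a' t) y = (\<lambda>t. M_lact a y t + M_lact a' y t)"
proof
  fix i
  have "M_lact (\<lambda>t. a t + a' t) y i = infsum (\<lambda>k. a (i, k) * y k + a' (i, k) * y k) UNIV"
    by (simp add: M_lact_app distrib_right)
  also have "\<dots> = M_lact a y i + M_lact a' y i"
    unfolding M_lact_app
    by (rule infsum_add[OF prod_summ[OF l1_rows[OF assms(1)] assms(3)] prod_summ[OF l1_rows[OF assms(2)] assms(3)]])
  finally show "M_lact (\<lambda>t. a t + a' t) y i = M_lact a y i + M_lact a' y i" .
qed

lemma M_lact_addR:
  assumes "a \<in> l1" "y \<in> l1" "y' \<in> l1"
  shows "M_lact a (\<lambda>t. y t + y' t) = (\<lambda>t. M_lact a y t + M_lact a y' t)"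
proof
  fix i
  have "M_lact a (\<lambda>t. y t + y' t) i = infsum (\<lambda>k. a (i, k) * y k + a (i, k) * y' k) UNIV"
    by (simp add: M_lact_app distrib_left)
  also have "\<dots> = M_lact a y i + M_lact a y' i"
    unfolding M_lact_app
    by (rule infsum_add[OF prod_summ[OF l1_rows[OF assms(1)] assms(2)] prod_summ[OF l1_rows[OF assms(1)] assms(3)]])
  finally show "M_lact a (\<lambda>t. y t + y' t) i = M_lact a y i + M_lact a y' i" .
qed

lemma M_lact_scaleL: "M_lact (\<lambda>t. c * a t) y = (\<lambda>t. c * M_lact a y t)"
  by (simp add: M_lact_def mult.assoc infsum_cmult_right')

lemma M_lact_scaleR: "M_lact a (\<lambda>t. c * y t) = (\<lambda>t. c * M_lact a y t)"
  by (simp add: M_lact_def mult.left_commute infsum_cmult_right')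

lemma M_ract_addL:
  assumes "x \<in> l1" "x' \<in> l1" "a \<in> l1"
  shows "M_ract (\<lambda>t. x t + x' t) a = (\<lambda>t. M_ract x a t + M_ract x' a t)"
proof
  fix i
  have "M_ract (\<lambda>t. x t + x' t) a i = infsum (\<lambda>k. x k * a (k, i) + x' k * a (k, i)) UNIV"
    by (simp add: M_ract_app distrib_right)
  also have "\<dots> = M_ract x a i + M_ract x' a i"
    unfolding M_ract_app
    by (rule infsum_add[OF prod_summ[OF assms(1) l1_cols[OF assms(3)]] prod_summ[OF assms(2) l1_cols[OF assms(3)]]])
  finally show "M_ract (\<lambda>t. x t + x' t) a i = M_ract x a i + M_ract x' a i" .
qed

lemma M_ract_addR:
  assumes "x \<in> l1" "a \<in> l1" "a' \<in> l1"
  shows "M_ract x (\<lambda>t. a t + a' t) = (\<lambda>t. M_ract x a t + M_ract x a' t)"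
proof
  fix i
  have "M_ract x (\<lambda>t. a t + a' t) i = infsum (\<lambda>k. x k * a (k, i) + x k * a' (k, i)) UNIV"
    by (simp add: M_ract_app distrib_left)
  also have "\<dots> = M_ract x a i + M_ract x a' i"
    unfolding M_ract_app
    by (rule infsum_add[OF prod_summ[OF assms(1) l1_cols[OF assms(2)]] prod_summ[OF assms(1) l1_cols[OF assms(3)]]])
  finally show "M_ract x (\<lambda>t. a t + a' t) i = M_ract x a i + M_ract x a' i" .
qed

lemma M_ract_scaleL: "M_ract (\<lambda>t. c * x t) a = (\<lambda>t. c * M_ract x a t)"
  by (simp add: M_ract_def mult.assoc infsum_cmult_right')

lemma M_ract_scaleR: "M_ract x (\<lambda>t. c * a t) = (\<lambda>t. c * M_ract x a t)"
  by (simp add: M_ract_def mult.left_commute infsum_cmult_right')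

lemma M_mult_addL:
  assumes "a \<in> l1" "a' \<in> l1" "b \<in> l1"
  shows "M_mult (\<lambda>t. a t + a' t) b = (\<lambda>t. M_mult a b t + M_mult a' b t)"
proof
  fix t :: "'a \<times> 'a" obtain i j where t: "t = (i, j)" by fastforce
  have "M_mult (\<lambda>t. a t + a' t) b (i, j) = infsum (\<lambda>k. a (i, k) * b (k, j) + a' (i, k) * b (k, j)) UNIV"
    by (simp add: M_mult_app distrib_right)
  also have "\<dots> = M_mult a b (i, j) + M_mult a' b (i, j)"
    unfolding M_mult_app
    by (rule infsum_add[OF prod_summ[OF l1_rows[OF assms(1)] l1_cols[OF assms(3)]] prod_summ[OF l1_rows[OF assms(2)] l1_cols[OF assms(3)]]])
  finally show "M_mult (\<lambda>t. a t + a' t) b t = M_mult a b t + M_mult a' b t" unfolding t .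
qed

lemma M_mult_addR:
  assumes "a \<in> l1" "b \<in> l1" "b' \<in> l1"
  shows "M_mult a (\<lambda>t. b t + b' t) = (\<lambda>t. M_mult a b t + M_mult a b' t)"
proof
  fix t :: "'a \<times> 'a" obtain i j where t: "t = (i, j)" by fastforce
  have "M_mult a (\<lambda>t. b t + b' t) (i, j) = infsum (\<lambda>k. a (i, k) * b (k, j) + a (i, k) * b' (k, j)) UNIV"
    by (simp add: M_mult_app distrib_left)
  also have "\<dots> = M_mult a b (i, j) + M_mult a b' (i, j)"
    unfolding M_mult_app
    by (rule infsum_add[OF prod_summ[OF l1_rows[OF assms(1)] l1_cols[OF assms(2)]] prod_summ[OF l1_rows[OF assms(1)] l1_cols[OF assms(3)]]])
  finally show "M_mult a (\<lambda>t. b t + b' t) t = M_mult a b t + M_mult a b' t" unfolding t .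
qed

lemma M_mult_scaleL: "M_mult (\<lambda>t. c * a t) b = (\<lambda>t. c * M_mult a b t)"
  by (auto simp: M_mult_def mult.assoc infsum_cmult_right')

lemma M_mult_scaleR: "M_mult a (\<lambda>t. c * b t) = (\<lambda>t. c * M_mult a b t)"
  by (auto simp: M_mult_def mult.left_commute infsum_cmult_right')

lemma assoc_gen:
  fixes f :: "'l \<Rightarrow> complex" and g :: "'l \<times> 'k \<Rightarrow> complex" and h :: "'k \<Rightarrow> complex"
  assumes f: "\<And>l. norm (f l) \<le> Cf" and g: "g \<in> l1" and h: "\<And>k. norm (h k) \<le> Ch"
  shows "infsum (\<lambda>k. infsum (\<lambda>l. f l * g (l, k)) UNIV * h k) UNIV
       = infsum (\<lambda>l. f l * infsum (\<lambda>k. g (l, k) * h k) UNIV) UNIV"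
proof -
  have Cf: "Cf \<ge> 0" using f[of undefined] norm_ge_zero order_trans by blast
  have "norm (f l * g (l, k) * h k) \<le> (Cf * Ch) * norm (g (l, k))" for l k
  proof -
    have "norm (f l * g (l, k) * h k) = norm (f l) * norm (h k) * norm (g (l, k))"
      by (simp add: norm_mult)
    also have "\<dots> \<le> (Cf * Ch) * norm (g (l, k))"
      by (intro mult_right_mono mult_mono f h) (use Cf in auto)
    finally show ?thesis .
  qed
  then have "(\<lambda>(l, k). f l * g (l, k) * h k) \<in> l1"
    using l1_comparison(1)[OF g, of "\<lambda>(l, k). f l * g (l, k) * h k" "Cf * Ch"] by auto
  then have S: "(\<lambda>(l, k). f l * g (l, k) * h k) summable_on UNIV \<times> UNIV"
    using l1_summable by fastforce
  have "infsum (\<lambda>l. infsum (\<lambda>k. f l * g (l, k) * h k) UNIV) UNIV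
      = infsum (\<lambda>k. infsum (\<lambda>l. f l * g (l, k) * h k) UNIV) UNIV"
    by (rule infsum_swap_banach[OF S])
  moreover have "infsum (\<lambda>l. f l * g (l, k) * h k) UNIV = infsum (\<lambda>l. f l * g (l, k)) UNIV * h k" for k
    by (rule infsum_cmult_left')
  moreover have "infsum (\<lambda>k. f l * g (l, k) * h k) UNIV = f l * infsum (\<lambda>k. g (l, k) * h k) UNIV" for l
    by (simp add: mult.assoc infsum_cmult_right')
  ultimately show ?thesis by simp
qed

lemma M_lact_assoc:
  assumes "a \<in> l1" "b \<in> l1" "y \<in> l1"
  shows "M_lact (M_mult a b) y = M_lact a (M_lact b y)"
proof
  fix i
  show "M_lact (M_mult a b) y i = M_lact a (M_lact b y) i"
    unfolding M_lact_app M_mult_app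
    by (rule assoc_gen[OF l1_le_norm[OF l1_rows[OF assms(1)]] assms(2) l1_le_norm[OF assms(3)]])
qed

lemma M_ract_assoc:
  assumes "x \<in> l1" "a \<in> l1" "b \<in> l1"
  shows "M_ract (M_ract x a) b = M_ract x (M_mult a b)"
proof
  fix i
  show "M_ract (M_ract x a) b i = M_ract x (M_mult a b) i"
    unfolding M_ract_app M_mult_app
    by (rule assoc_gen[OF l1_le_norm[OF assms(1)] assms(2) l1_le_norm[OF l1_cols[OF assms(3)]]])
qed

lemma M_mult_assoc:
  assumes "a \<in> l1" "b \<in> l1" "c \<in> l1"
  shows "M_mult (M_mult a b) c = M_mult a (M_mult b c)"
proof
  fix t :: "'a \<times> 'a" obtain i j where t: "t = (i, j)" by fastforce
  show "M_mult (M_mult a b) c t = M_mult a (M_mult b c) t"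
    unfolding t M_mult_app
    by (rule assoc_gen[OF l1_le_norm[OF l1_rows[OF assms(1)]] assms(2) l1_le_norm[OF l1_cols[OF assms(3)]]])
qed


lemma tensL: "tens (l1::('i \<times> 'i \<Rightarrow> complex) set) M_mult M_lact (M_lact :: ('i \<times> 'i \<Rightarrow> complex) \<Rightarrow> ('i \<Rightarrow> complex) \<Rightarrow> ('i \<Rightarrow> complex))"
  by unfold_locales (auto simp: M_lact_l1 M_lact_addL M_lact_addR M_lact_scaleL M_lact_scaleR M_lact_assoc)

lemma tensR: "tens (l1::('i \<times> 'i \<Rightarrow> complex) set) M_ract M_mult (M_ract :: ('i \<Rightarrow> complex) \<Rightarrow> ('i \<times> 'i \<Rightarrow> complex) \<Rightarrow> ('i \<Rightarrow> complex))"
  by unfold_locales (auto simp: M_ract_l1 M_ract_addL M_ract_addR M_ract_scaleL M_ract_scaleR M_ract_assoc)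

lemma tensM: "tens (l1::('i \<times> 'i \<Rightarrow> complex) set) M_mult M_mult (M_mult :: ('i \<times> 'i \<Rightarrow> complex) \<Rightarrow> ('i \<times> 'i \<Rightarrow> complex) \<Rightarrow> ('i \<times> 'i \<Rightarrow> complex))"
  by unfold_locales (auto simp: M_mult_l1 M_mult_addL M_mult_addR M_mult_scaleL M_mult_scaleR M_mult_assoc)

interpretation TL: tens "l1::('i \<times> 'i \<Rightarrow> complex) set" M_mult M_lact "M_lact :: ('i \<times> 'i \<Rightarrow> complex) \<Rightarrow> ('i \<Rightarrow> complex) \<Rightarrow> ('i \<Rightarrow> complex)"
  by (rule tensL)

interpretation TR: tens "l1::('i \<times> 'i \<Rightarrow> complex) set" M_ract M_mult "M_ract :: ('i \<Rightarrow> complex) \<Rightarrow> ('i \<times> 'i \<Rightarrow> complex) \<Rightarrow> ('i \<Rightarrow> complex)"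
  by (rule tensR)

interpretation TM: tens "l1::('i \<times> 'i \<Rightarrow> complex) set" M_mult M_mult "M_mult :: ('i \<times> 'i \<Rightarrow> complex) \<Rightarrow> ('i \<times> 'i \<Rightarrow> complex) \<Rightarrow> ('i \<times> 'i \<Rightarrow> complex)"
  by (rule tensM)

definition colv :: "'i \<Rightarrow> ('i \<Rightarrow> complex) \<Rightarrow> ('i \<times> 'i \<Rightarrow> complex)" where
  "colv i0 x = (\<lambda>(i, j). if j = i0 then x i else 0)"

definition rowv :: "'i \<Rightarrow> ('i \<Rightarrow> complex) \<Rightarrow> ('i \<times> 'i \<Rightarrow> complex)" where
  "rowv i0 x = (\<lambda>(k, j). if k = i0 then x j else 0)"

lemma colv_l1: "x \<in> l1 \<Longrightarrow> colv i0 x \<in> l1" "l1norm (colv i0 x) = l1norm x"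
proof -
  have e: "colv i0 x \<in> l1 \<longleftrightarrow> (colv i0 x \<circ> (\<lambda>i. (i, i0))) \<in> l1"
          "l1norm (colv i0 x) = l1norm (colv i0 x \<circ> (\<lambda>i. (i, i0)))"
    by (rule l1_embed; auto simp: inj_on_def colv_def)+
  have "colv i0 x \<circ> (\<lambda>i. (i, i0)) = x" by (auto simp: colv_def)
  then show "x \<in> l1 \<Longrightarrow> colv i0 x \<in> l1" "l1norm (colv i0 x) = l1norm x" using e by auto
qed

lemma rowv_l1: "x \<in> l1 \<Longrightarrow> rowv i0 x \<in> l1" "l1norm (rowv i0 x) = l1norm x"
proof -
  have e: "rowv i0 x \<in> l1 \<longleftrightarrow> (rowv i0 x \<circ> (\<lambda>j. (i0, j))) \<in> l1"
          "l1norm (rowv i0 x) = l1norm (rowv i0 x \<circ> (\<lambda>j. (i0, j)))"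
    by (rule l1_embed; auto simp: inj_on_def rowv_def)+
  have "rowv i0 x \<circ> (\<lambda>j. (i0, j)) = x" by (auto simp: rowv_def)
  then show "x \<in> l1 \<Longrightarrow> rowv i0 x \<in> l1" "l1norm (rowv i0 x) = l1norm x" using e by auto
qed

lemma lact_colv: "M_lact (colv i0 x) (delta i0) = x"
proof
  fix i
  show "M_lact (colv i0 x) (delta i0) i = x i"
    unfolding M_lact_app by (subst infsum_single_point[where a=i0]) (auto simp: colv_def delta_def)
qed

lemma ract_rowv: "M_ract (delta i0) (rowv i0 x) = x"
proof
  fix j
  show "M_ract (delta i0) (rowv i0 x) j = x j"
    unfolding M_ract_app by (subst infsum_single_point[where a=i0]) (auto simp: rowv_def delta_def)
qed

lemma mult_colv: "M_mult a (colv i0 x) = colv i0 (M_lact a x)"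
proof
  fix t :: "'a \<times> 'a" obtain i j where t: "t = (i, j)" by fastforce
  show "M_mult a (colv i0 x) t = colv i0 (M_lact a x) t"
    unfolding t M_mult_app by (cases "j = i0") (auto simp: colv_def M_lact_app)
qed

lemma mult_rowv: "M_mult (rowv i0 x) a = rowv i0 (M_ract x a)"
proof
  fix t :: "'a \<times> 'a" obtain i j where t: "t = (i, j)" by fastforce
  show "M_mult (rowv i0 x) a t = rowv i0 (M_ract x a) t"
    unfolding t M_mult_app by (cases "i = i0") (auto simp: rowv_def M_ract_app)
qed

lemma colv_sum: "(\<lambda>t. \<Sum>p\<in>F. c p * colv i0 (f p) t) = colv i0 (\<lambda>t. \<Sum>p\<in>F. c p * f p t)"
  by (auto simp: colv_def)

lemma rowv_sum: "(\<lambda>t. \<Sum>p\<in>F. c p * rowv i0 (f p) t) = rowv i0 (\<lambda>t. \<Sum>p\<in>F. c p * f p t)"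
  by (auto simp: rowv_def)


lemma left_approx:
  fixes u :: "('i \<times> 'i \<Rightarrow> complex) \<times> ('i \<Rightarrow> complex) \<Rightarrow> complex"
  assumes u: "u \<in> free_tensor l1 l1" and ep: "e > 0"
  shows "\<exists>v\<in>free_tensor l1 l1. eqv (tensor_relations l1 l1 l1 M_mult M_lact) u v \<and> cost v \<le> l1norm (tmap M_lact u) + e"
proof -
  define i0 :: 'i where "i0 = undefined"
  define e0 :: "'i \<Rightarrow> complex" where "e0 = delta i0"
  let ?E = "eqv (tensor_relations (l1::('i \<times> 'i \<Rightarrow> complex) set) (l1::('i \<Rightarrow> complex) set) l1 M_mult M_lact)"
  let ?F = "fsupp u"
  have fin: "finite ?F" using u by (simp add: free_tensor_def)
  have mem: "fst p \<in> l1" "snd p \<in> l1" if "p \<in> ?F" for p using u that by (auto simp: free_tensor_def)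
  have e0: "e0 \<in> l1" "l1norm e0 = 1" unfolding e0_def by (rule l1_delta)+
  define f where "f p = colv i0 (M_lact (fst p) (snd p))" for p :: "('i \<times> 'i \<Rightarrow> complex) \<times> ('i \<Rightarrow> complex)"
  have fl1: "f p \<in> l1" if "p \<in> ?F" for p
    unfolding f_def by (rule colv_l1(1)[OF M_lact_l1(1)[OF mem[OF that]]])
  have step: "?E (delta p) (delta (f p, e0))" if "p \<in> ?F" for p
  proof -
    obtain a x where p: "p = (a, x)" by fastforce
    have a: "a \<in> l1" and x: "x \<in> l1" using mem[OF that] p by auto
    have "?E (delta (M_mult a (colv i0 x), e0)) (delta (a, M_lact (colv i0 x) e0))"
      by (rule TL.rel_bal[OF a colv_l1(1)[OF x] e0(1)])
    then have "?E (delta (f p, e0)) (delta p)"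
      unfolding mult_colv e0_def lact_colv f_def p by simp
    then show ?thesis by (rule eqv_sym)
  qed
  have "u = (\<lambda>q. \<Sum>p\<in>?F. u p * delta p q)" by (rule free_tensor_repr[OF fin])
  moreover have "?E (\<lambda>q. \<Sum>p\<in>?F. u p * delta p q) (\<lambda>q. \<Sum>p\<in>?F. u p * delta (f p, e0) q)"
    by (rule eqv_sum[OF fin eqv_scale[OF step]])
  ultimately have 1: "?E u (\<lambda>q. \<Sum>p\<in>?F. u p * delta (f p, e0) q)" by simp
  have 2: "?E (\<lambda>q. \<Sum>p\<in>?F. u p * delta (f p, e0) q) (delta (\<lambda>t. \<Sum>p\<in>?F. u p * f p t, e0))"
    by (rule TL.lincombL[OF fin fl1 e0(1)])
  have 3: "(\<lambda>t. \<Sum>p\<in>?F. u p * f p t) = colv i0 (tmap M_lact u)"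
    unfolding f_def colv_sum by (simp add: tmap_def)
  let ?v = "delta (colv i0 (tmap M_lact u), e0)"
  have "?E u ?v" using eqv_trans[OF 1 2] 3 by simp
  moreover have "?v \<in> free_tensor l1 l1"
    by (rule free_tensor_delta[OF colv_l1(1)[OF TL.tmap_l1[OF u]] e0(1)])
  moreover have "cost ?v = l1norm (tmap M_lact u)"
    by (simp add: cost_delta colv_l1(2) e0(2))
  ultimately show ?thesis using ep by force
qed

lemma left_dense:
  fixes z :: "'i \<Rightarrow> complex"
  assumes z: "z \<in> l1" and "e > 0"
  shows "\<exists>u\<in>free_tensor (l1 :: ('i \<times> 'i \<Rightarrow> complex) set) (l1 :: ('i \<Rightarrow> complex) set). l1norm (\<lambda>t. tmap M_lact u t - z t) < e"
proof -
  define i0 :: 'i where "i0 = undefined"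
  let ?u = "delta (colv i0 z, delta i0)"
  have "?u \<in> free_tensor l1 l1" by (rule free_tensor_delta[OF colv_l1(1)[OF z] l1_delta(1)])
  moreover have "tmap M_lact ?u = z" by (simp add: tmap_delta lact_colv)
  ultimately show ?thesis using assms by (intro bexI[of _ ?u]) auto
qed

lemma left_induced: "l1_left_induced TYPE('i)"
  unfolding l1_left_induced_def
  by (rule TL.induced[OF left_approx left_dense]) auto

lemma right_approx:
  fixes u :: "('i \<Rightarrow> complex) \<times> ('i \<times> 'i \<Rightarrow> complex) \<Rightarrow> complex"
  assumes u: "u \<in> free_tensor l1 l1" and ep: "e > 0"
  shows "\<exists>v\<in>free_tensor l1 l1. eqv (tensor_relations l1 l1 l1 M_ract M_mult) u v \<and> cost v \<le> l1norm (tmap M_ract u) + e"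
proof -
  define i0 :: 'i where "i0 = undefined"
  define e0 :: "'i \<Rightarrow> complex" where "e0 = delta i0"
  let ?E = "eqv (tensor_relations (l1::('i \<Rightarrow> complex) set) (l1::('i \<times> 'i \<Rightarrow> complex) set) l1 M_ract M_mult)"
  let ?F = "fsupp u"
  have fin: "finite ?F" using u by (simp add: free_tensor_def)
  have mem: "fst p \<in> l1" "snd p \<in> l1" if "p \<in> ?F" for p using u that by (auto simp: free_tensor_def)
  have e0: "e0 \<in> l1" "l1norm e0 = 1" unfolding e0_def by (rule l1_delta)+
  define f where "f p = rowv i0 (M_ract (fst p) (snd p))" for p :: "('i \<Rightarrow> complex) \<times> ('i \<times> 'i \<Rightarrow> complex)"
  have fl1: "f p \<in> l1" if "p \<in> ?F" for p
    unfolding f_def by (rule rowv_l1(1)[OF M_ract_l1(1)[OF mem[OF that]]])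
  have step: "?E (delta p) (delta (e0, f p))" if "p \<in> ?F" for p
  proof -
    obtain x a where p: "p = (x, a)" by fastforce
    have x: "x \<in> l1" and a: "a \<in> l1" using mem[OF that] p by auto
    have "?E (delta (M_ract e0 (rowv i0 x), a)) (delta (e0, M_mult (rowv i0 x) a))"
      by (rule TR.rel_bal[OF e0(1) rowv_l1(1)[OF x] a])
    then show ?thesis
      unfolding mult_rowv e0_def ract_rowv f_def p by simp
  qed
  have "u = (\<lambda>q. \<Sum>p\<in>?F. u p * delta p q)" by (rule free_tensor_repr[OF fin])
  moreover have "?E (\<lambda>q. \<Sum>p\<in>?F. u p * delta p q) (\<lambda>q. \<Sum>p\<in>?F. u p * delta (e0, f p) q)"
    by (rule eqv_sum[OF fin eqv_scale[OF step]])
  ultimately have 1: "?E u (\<lambda>q. \<Sum>p\<in>?F. u p * delta (e0, f p) q)" by simp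
  have 2: "?E (\<lambda>q. \<Sum>p\<in>?F. u p * delta (e0, f p) q) (delta (e0, \<lambda>t. \<Sum>p\<in>?F. u p * f p t))"
    by (rule TR.lincombR[OF fin fl1 e0(1)])
  have 3: "(\<lambda>t. \<Sum>p\<in>?F. u p * f p t) = rowv i0 (tmap M_ract u)"
    unfolding f_def rowv_sum by (simp add: tmap_def)
  let ?v = "delta (e0, rowv i0 (tmap M_ract u))"
  have "?E u ?v" using eqv_trans[OF 1 2] 3 by simp
  moreover have "?v \<in> free_tensor l1 l1"
    by (rule free_tensor_delta[OF e0(1) rowv_l1(1)[OF TR.tmap_l1[OF u]]])
  moreover have "cost ?v = l1norm (tmap M_ract u)"
    by (simp add: cost_delta rowv_l1(2) e0(2))
  ultimately show ?thesis using ep by force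
qed

lemma right_dense:
  fixes z :: "'i \<Rightarrow> complex"
  assumes z: "z \<in> l1" and "e > 0"
  shows "\<exists>u\<in>free_tensor (l1 :: ('i \<Rightarrow> complex) set) (l1 :: ('i \<times> 'i \<Rightarrow> complex) set). l1norm (\<lambda>t. tmap M_ract u t - z t) < e"
proof -
  define i0 :: 'i where "i0 = undefined"
  let ?u = "delta (delta i0, rowv i0 z)"
  have "?u \<in> free_tensor l1 l1" by (rule free_tensor_delta[OF l1_delta(1) rowv_l1(1)[OF z]])
  moreover have "tmap M_ract ?u = z" by (simp add: tmap_delta ract_rowv)
  ultimately show ?thesis using assms by (intro bexI[of _ ?u]) auto
qed

lemma right_induced: "l1_right_induced TYPE('i)"
  unfolding l1_right_induced_def
  by (rule TR.induced[OF right_approx right_dense]) auto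


definition Rw :: "'i \<Rightarrow> 'i \<Rightarrow> ('i \<times> 'i \<Rightarrow> complex) \<Rightarrow> ('i \<times> 'i \<Rightarrow> complex)" where
  "Rw i0 i a = (\<lambda>(i', j). if i' = i0 then a (i, j) else 0)"

definition trunc :: "'i set \<Rightarrow> ('i \<times> 'i \<Rightarrow> complex) \<Rightarrow> ('i \<times> 'i \<Rightarrow> complex)" where
  "trunc K a = (\<lambda>(i, j). if i \<in> K then a (i, j) else 0)"

definition rest :: "'i set \<Rightarrow> ('i \<times> 'i \<Rightarrow> complex) \<Rightarrow> ('i \<times> 'i \<Rightarrow> complex)" where
  "rest K a = (\<lambda>(i, j). if i \<in> K then 0 else a (i, j))"

lemma Rw_l1: "a \<in> l1 \<Longrightarrow> Rw i0 i a \<in> l1" "l1norm (Rw i0 i a) = l1norm (\<lambda>j. a (i, j))"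
proof -
  have e: "Rw i0 i a \<in> l1 \<longleftrightarrow> (Rw i0 i a \<circ> (\<lambda>j. (i0, j))) \<in> l1"
          "l1norm (Rw i0 i a) = l1norm (Rw i0 i a \<circ> (\<lambda>j. (i0, j)))"
    by (rule l1_embed; auto simp: inj_on_def Rw_def)+
  have "Rw i0 i a \<circ> (\<lambda>j. (i0, j)) = (\<lambda>j. a (i, j))" by (auto simp: Rw_def)
  then show "a \<in> l1 \<Longrightarrow> Rw i0 i a \<in> l1" "l1norm (Rw i0 i a) = l1norm (\<lambda>j. a (i, j))"
    using e l1_rows[of a i] by auto
qed

lemma mult_E_Rw: "M_mult (delta (i, i0)) (Rw i0 i a) = (\<lambda>(i', j). if i' = i then a (i, j) else 0)"
proof
  fix t :: "'a \<times> 'a" obtain i' j where t: "t = (i', j)" by fastforce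
  show "M_mult (delta (i, i0)) (Rw i0 i a) t = (\<lambda>(i', j). if i' = i then a (i, j) else 0) t"
    unfolding t M_mult_app
    by (subst infsum_single_point[where a=i0]) (auto simp: delta_def Rw_def)
qed

lemma mult_Rw: "M_mult (Rw i0 i a) b = Rw i0 i (M_mult a b)"
proof
  fix t :: "'a \<times> 'a" obtain i' j where t: "t = (i', j)" by fastforce
  show "M_mult (Rw i0 i a) b t = Rw i0 i (M_mult a b) t"
    unfolding t M_mult_app by (cases "i' = i0") (auto simp: Rw_def M_mult_app)
qed

lemma Rw_sum: "(\<lambda>t. \<Sum>p\<in>F. c p * Rw i0 i (f p) t) = Rw i0 i (\<lambda>t. \<Sum>p\<in>F. c p * f p t)"
  by (auto simp: Rw_def)

lemma trunc_sum:
  assumes "finite K"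
  shows "(\<lambda>t. \<Sum>i\<in>K. M_mult (delta (i, i0)) (Rw i0 i a) t) = trunc K a"
proof
  fix t :: "'a \<times> 'a" obtain i' j where t: "t = (i', j)" by fastforce
  have "(\<Sum>i\<in>K. M_mult (delta (i, i0)) (Rw i0 i a) (i', j)) = (\<Sum>i\<in>K. if i' = i then a (i', j) else 0)"
    unfolding mult_E_Rw by (rule sum.cong) auto
  also have "\<dots> = trunc K a (i', j)" using assms by (simp add: trunc_def)
  finally show "(\<Sum>i\<in>K. M_mult (delta (i, i0)) (Rw i0 i a) t) = trunc K a t" unfolding t .
qed

lemma trunc_rest: "a = (\<lambda>t. trunc K a t + rest K a t)"
  by (auto simp: trunc_def rest_def)

lemma trunc_l1: "a \<in> l1 \<Longrightarrow> trunc K a \<in> l1"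
  by (rule l1_comparison(1)[of a _ 1]) (auto simp: trunc_def)

lemma rest_l1: "a \<in> l1 \<Longrightarrow> rest K a \<in> l1"
  by (rule l1_comparison(1)[of a _ 1]) (auto simp: rest_def)

lemma rest_bound:
  assumes a: "a \<in> l1" and S: "fst ` S \<subseteq> K"
  shows "l1norm (rest K a) \<le> infsum (\<lambda>q. norm (a q)) (UNIV - S)"
proof -
  have z: "rest K a q = 0" if "q \<in> S" for q using that S by (auto simp: rest_def split: prod.splits)
  have "l1norm (rest K a) = infsum (\<lambda>q. norm (rest K a q)) (UNIV - S)"
    unfolding l1norm_def by (rule infsum_cong_neutral) (auto simp: z)
  also have "\<dots> \<le> infsum (\<lambda>q. norm (a q)) (UNIV - S)"
  proof (rule infsum_mono)
    show "(\<lambda>q. norm (rest K a q)) summable_on UNIV - S"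
      using rest_l1[OF a, of K] unfolding l1_def by (auto intro: summable_on_subset_banach)
    show "(\<lambda>q. norm (a q)) summable_on UNIV - S"
      using a unfolding l1_def by (auto intro: summable_on_subset_banach)
    show "norm (rest K a q) \<le> norm (a q)" for q by (auto simp: rest_def split: prod.splits)
  qed
  finally show ?thesis .
qed

lemma tail:
  assumes "finite F" "\<And>p. p \<in> F \<Longrightarrow> g p \<in> l1" "d > 0"
  shows "\<exists>S. finite S \<and> (\<forall>p\<in>F. infsum (\<lambda>q. norm (g p q)) (UNIV - S) < d)"
proof -
  have ev: "\<forall>p\<in>F. eventually (\<lambda>S. dist (sum (\<lambda>q. norm (g p q)) S) (infsum (\<lambda>q. norm (g p q)) UNIV) < d) (finite_subsets_at_top UNIV)"
  proof
    fix p assume "p \<in> F"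
    then have "(\<lambda>q. norm (g p q)) summable_on UNIV" using assms(2) by (simp add: l1_def)
    from infsum_tendsto[OF this] show "eventually (\<lambda>S. dist (sum (\<lambda>q. norm (g p q)) S) (infsum (\<lambda>q. norm (g p q)) UNIV) < d) (finite_subsets_at_top UNIV)"
      using assms(3) tendstoD by blast
  qed
  let ?Q = "\<lambda>S. \<forall>p\<in>F. dist (sum (\<lambda>q. norm (g p q)) S) (infsum (\<lambda>q. norm (g p q)) UNIV) < d"
  have "eventually ?Q (finite_subsets_at_top UNIV)"
    by (rule eventually_ball_finite[OF assms(1)]) fact
  then have "\<exists>X. finite X \<and> X \<subseteq> UNIV \<and> (\<forall>Y. finite Y \<and> X \<subseteq> Y \<and> Y \<subseteq> UNIV \<longrightarrow> ?Q Y)"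
    by (simp only: eventually_finite_subsets_at_top)
  then obtain S where S0: "finite S" "\<forall>Y. finite Y \<and> S \<subseteq> Y \<and> Y \<subseteq> UNIV \<longrightarrow> ?Q Y" by blast
  have S: "finite S" "?Q S" using S0 by auto
  have "infsum (\<lambda>q. norm (g p q)) (UNIV - S) < d" if "p \<in> F" for p
  proof -
    have s: "(\<lambda>q. norm (g p q)) summable_on UNIV" using assms(2) that by (simp add: l1_def)
    have "infsum (\<lambda>q. norm (g p q)) (UNIV - S) = infsum (\<lambda>q. norm (g p q)) UNIV - sum (\<lambda>q. norm (g p q)) S"
      using infsum_Diff[OF s summable_on_finite[OF S(1)]] S(1) by simp
    then show ?thesis using S(2) that by (auto simp: dist_real_def)
  qed
  then show ?thesis using S(1) by blast
qed

lemma rows_finite_le: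
  assumes "W \<in> l1" "finite K"
  shows "(\<Sum>i\<in>K. l1norm (\<lambda>j. W (i, j))) \<le> l1norm W"
proof -
  have "(\<Sum>i\<in>K. l1norm (\<lambda>j. W (i, j))) = infsum (\<lambda>i. l1norm (\<lambda>j. W (i, j))) K"
    using assms(2) by simp
  also have "\<dots> \<le> infsum (\<lambda>i. l1norm (\<lambda>j. W (i, j))) UNIV"
    by (rule infsum_mono_neutral) (use assms l1_rows_sum(1)[OF assms(1)] in \<open>auto simp: l1norm_nonneg\<close>)
  also have "\<dots> = l1norm W" using l1_rows_sum(2)[OF assms(1)] by simp
  finally show ?thesis .
qed


lemma trunc_rest': "(\<lambda>t. trunc K a t + rest K a t) = a"
  by (auto simp: trunc_def rest_def)

lemma self_approx:
  fixes u :: "('i \<times> 'i \<Rightarrow> complex) \<times> ('i \<times> 'i \<Rightarrow> complex) \<Rightarrow> complex"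
  assumes u: "u \<in> free_tensor l1 l1" and ep: "e > 0"
  shows "\<exists>v\<in>free_tensor l1 l1. eqv (tensor_relations l1 l1 l1 M_mult M_mult) u v \<and> cost v \<le> l1norm (tmap M_mult u) + e"
proof -
  define i0 :: 'i where "i0 = undefined"
  let ?E = "eqv (tensor_relations (l1::('i \<times> 'i \<Rightarrow> complex) set) (l1::('i \<times> 'i \<Rightarrow> complex) set) l1 M_mult M_mult)"
  let ?F = "fsupp u"
  have fin: "finite ?F" using u by (simp add: free_tensor_def)
  have mem: "fst p \<in> l1" "snd p \<in> l1" if "p \<in> ?F" for p using u that by (auto simp: free_tensor_def)
  define C where "C = (\<Sum>p\<in>?F. norm (u p) * l1norm (snd p))"
  have C0: "C \<ge> 0" unfolding C_def by (intro sum_nonneg mult_nonneg_nonneg norm_ge_zero l1norm_nonneg)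
  define d where "d = e / (C + 1)"
  have d0: "d > 0" unfolding d_def using ep C0 by simp
  have dC: "d * C \<le> e"
  proof -
    have "d * C \<le> d * (C + 1)" using d0 by simp
    also have "\<dots> = e" unfolding d_def using C0 by simp
    finally show ?thesis .
  qed
  obtain S where S: "finite S" "\<forall>p\<in>?F. infsum (\<lambda>q. norm (fst p q)) (UNIV - S) < d"
    using tail[OF fin, of fst, OF _ d0] mem by blast
  define K where "K = fst ` S"
  have finK: "finite K" unfolding K_def using S(1) by simp
  define W where "W = tmap M_mult u"
  have W: "W \<in> l1" unfolding W_def by (rule TM.tmap_l1[OF u])
  define D where "D i p = delta (delta (i, i0), Rw i0 i (M_mult (fst p) (snd p)))"
    for i and p :: "('i \<times> 'i \<Rightarrow> complex) \<times> ('i \<times> 'i \<Rightarrow> complex)"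
  define Dr where "Dr p = delta (rest K (fst p), snd p)" for p :: "('i \<times> 'i \<Rightarrow> complex) \<times> ('i \<times> 'i \<Rightarrow> complex)"
  have step: "?E (delta p) (\<lambda>q. (\<Sum>i\<in>K. D i p q) + Dr p q)" if "p \<in> ?F" for p
  proof -
    obtain a b where p: "p = (a, b)" by fastforce
    have a: "a \<in> l1" and b: "b \<in> l1" using mem[OF that] p by auto
    have X: "M_mult (delta (i, i0)) (Rw i0 i a) \<in> l1" for i
      by (rule M_mult_l1(1)[OF l1_delta(1) Rw_l1(1)[OF a]])
    have "?E (delta (\<lambda>t. trunc K a t + rest K a t, b)) (\<lambda>q. delta (trunc K a, b) q + delta (rest K a, b) q)"
      by (rule TM.rel_addL[OF trunc_l1[OF a] rest_l1[OF a] b])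
    then have 1: "?E (delta (a, b)) (\<lambda>q. delta (trunc K a, b) q + delta (rest K a, b) q)"
      by (simp only: trunc_rest')
    have "?E (delta (\<lambda>t. \<Sum>i\<in>K. M_mult (delta (i, i0)) (Rw i0 i a) t, b))
            (\<lambda>q. \<Sum>i\<in>K. delta (M_mult (delta (i, i0)) (Rw i0 i a), b) q)"
      by (rule TM.delta_sumL[OF finK X b])
    then have 2: "?E (delta (trunc K a, b)) (\<lambda>q. \<Sum>i\<in>K. delta (M_mult (delta (i, i0)) (Rw i0 i a), b) q)"
      by (simp only: trunc_sum[OF finK])
    have 3: "?E (delta (M_mult (delta (i, i0)) (Rw i0 i a), b)) (D i p)" for i
    proof -
      have "?E (delta (M_mult (delta (i, i0)) (Rw i0 i a), b)) (delta (delta (i, i0), M_mult (Rw i0 i a) b))"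
        by (rule TM.rel_bal[OF l1_delta(1) Rw_l1(1)[OF a] b])
      then show ?thesis unfolding mult_Rw D_def p by simp
    qed
    have "?E (delta (trunc K a, b)) (\<lambda>q. \<Sum>i\<in>K. D i p q)"
      using 2 eqv_sum[OF finK 3] by (rule eqv_trans)
    then have 4: "?E (\<lambda>q. delta (trunc K a, b) q + delta (rest K a, b) q) (\<lambda>q. (\<Sum>i\<in>K. D i p q) + delta (rest K a, b) q)"
      by (rule eqv_add[OF _ eqv_refl])
    have Drp: "Dr (a, b) = delta (rest K a, b)" by (simp add: Dr_def)
    show ?thesis unfolding p Drp using eqv_trans[OF 1 4] unfolding p .
  qed
  have "u = (\<lambda>q. \<Sum>p\<in>?F. u p * delta p q)" by (rule free_tensor_repr[OF fin])
  moreover have "?E (\<lambda>q. \<Sum>p\<in>?F. u p * delta p q) (\<lambda>q. \<Sum>p\<in>?F. u p * ((\<Sum>i\<in>K. D i p q) + Dr p q))"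
    by (rule eqv_sum[OF fin eqv_scale[OF step]])
  ultimately have A: "?E u (\<lambda>q. \<Sum>p\<in>?F. u p * ((\<Sum>i\<in>K. D i p q) + Dr p q))" by simp
  have B: "(\<lambda>q. \<Sum>p\<in>?F. u p * ((\<Sum>i\<in>K. D i p q) + Dr p q))
      = (\<lambda>q. (\<Sum>i\<in>K. \<Sum>p\<in>?F. u p * D i p q) + (\<Sum>p\<in>?F. u p * Dr p q))"
  proof
    fix q
    have "(\<Sum>p\<in>?F. u p * ((\<Sum>i\<in>K. D i p q) + Dr p q)) = (\<Sum>p\<in>?F. \<Sum>i\<in>K. u p * D i p q) + (\<Sum>p\<in>?F. u p * Dr p q)"
      by (simp add: distrib_left sum.distrib sum_distrib_left)
    also have "(\<Sum>p\<in>?F. \<Sum>i\<in>K. u p * D i p q) = (\<Sum>i\<in>K. \<Sum>p\<in>?F. u p * D i p q)"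
      by (rule sum.swap)
    finally show "(\<Sum>p\<in>?F. u p * ((\<Sum>i\<in>K. D i p q) + Dr p q)) = (\<Sum>i\<in>K. \<Sum>p\<in>?F. u p * D i p q) + (\<Sum>p\<in>?F. u p * Dr p q)" .
  qed
  have Cc: "?E (\<lambda>q. \<Sum>p\<in>?F. u p * D i p q) (delta (delta (i, i0), Rw i0 i W))" for i
  proof -
    have fl: "Rw i0 i (M_mult (fst p) (snd p)) \<in> l1" if "p \<in> ?F" for p
      by (rule Rw_l1(1)[OF M_mult_l1(1)[OF mem[OF that]]])
    have "?E (\<lambda>q. \<Sum>p\<in>?F. u p * delta (delta (i, i0), Rw i0 i (M_mult (fst p) (snd p))) q)
             (delta (delta (i, i0), \<lambda>t. \<Sum>p\<in>?F. u p * Rw i0 i (M_mult (fst p) (snd p)) t))"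
      by (rule TM.lincombR[OF fin fl l1_delta(1)])
    moreover have "(\<lambda>t. \<Sum>p\<in>?F. u p * Rw i0 i (M_mult (fst p) (snd p)) t) = Rw i0 i W"
      unfolding Rw_sum W_def by (simp add: tmap_def)
    ultimately show ?thesis unfolding D_def by simp
  qed
  define v where "v = (\<lambda>q. (\<Sum>i\<in>K. delta (delta (i, i0), Rw i0 i W) q) + (\<Sum>p\<in>?F. u p * Dr p q))"
  have Ev: "?E u v"
  proof -
    have X1: "?E (\<lambda>q. (\<Sum>i\<in>K. \<Sum>p\<in>?F. u p * D i p q) + (\<Sum>p\<in>?F. u p * Dr p q)) v"
      unfolding v_def by (rule eqv_add[OF eqv_sum[OF finK Cc] eqv_refl])
    have X2: "?E u (\<lambda>q. (\<Sum>i\<in>K. \<Sum>p\<in>?F. u p * D i p q) + (\<Sum>p\<in>?F. u p * Dr p q))"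
      using A unfolding B .
    show ?thesis by (rule eqv_trans[OF X2 X1])
  qed
  have v1: "(\<lambda>q. \<Sum>i\<in>K. delta (delta (i, i0), Rw i0 i W) q) \<in> free_tensor l1 l1"
    by (rule free_tensor_sum[OF finK free_tensor_delta[OF l1_delta(1) Rw_l1(1)[OF W]]])
  have v2: "(\<lambda>q. \<Sum>p\<in>?F. u p * Dr p q) \<in> free_tensor l1 l1"
    unfolding Dr_def
    by (rule free_tensor_sum[OF fin free_tensor_scale[OF free_tensor_delta[OF rest_l1[OF mem(1)] mem(2)]]])
  have vF: "v \<in> free_tensor l1 l1" unfolding v_def by (rule free_tensor_add[OF v1 v2])
  have c1: "cost (\<lambda>q. \<Sum>i\<in>K. delta (delta (i, i0), Rw i0 i W) q) \<le> l1norm W"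
  proof -
    have "cost (\<lambda>q. \<Sum>i\<in>K. delta (delta (i, i0), Rw i0 i W) q) \<le> (\<Sum>i\<in>K. cost (delta (delta (i, i0), Rw i0 i W)))"
      by (rule cost_sum[OF finK finite_fsupp_delta])
    also have "\<dots> = (\<Sum>i\<in>K. l1norm (\<lambda>j. W (i, j)))"
      by (simp add: cost_delta l1_delta(2) Rw_l1(2))
    also have "\<dots> \<le> l1norm W" by (rule rows_finite_le[OF W finK])
    finally show ?thesis .
  qed
  have c2: "cost (\<lambda>q. \<Sum>p\<in>?F. u p * Dr p q) \<le> d * C"
  proof -
    have "cost (\<lambda>q. \<Sum>p\<in>?F. u p * Dr p q) \<le> (\<Sum>p\<in>?F. cost (\<lambda>q. u p * Dr p q))"
      by (rule cost_sum[OF fin]) (auto simp: Dr_def intro: finite_subset[OF fsupp_scale finite_fsupp_delta])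
    also have "\<dots> = (\<Sum>p\<in>?F. norm (u p) * (l1norm (rest K (fst p)) * l1norm (snd p)))"
      by (rule sum.cong) (simp_all add: Dr_def cost_scale[OF finite_fsupp_delta] cost_delta)
    also have "\<dots> \<le> (\<Sum>p\<in>?F. norm (u p) * (d * l1norm (snd p)))"
    proof (rule sum_mono)
      fix p assume p: "p \<in> ?F"
      have "l1norm (rest K (fst p)) \<le> infsum (\<lambda>q. norm (fst p q)) (UNIV - S)"
        by (rule rest_bound[OF mem(1)[OF p]]) (simp add: K_def)
      also have "\<dots> < d" using S(2) p by blast
      finally have "l1norm (rest K (fst p)) \<le> d" by simp
      then show "norm (u p) * (l1norm (rest K (fst p)) * l1norm (snd p)) \<le> norm (u p) * (d * l1norm (snd p))"
        by (intro mult_left_mono mult_right_mono) (auto simp: l1norm_nonneg)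
    qed
    also have "\<dots> = d * C" unfolding C_def by (simp add: sum_distrib_left mult_ac)
    finally show ?thesis .
  qed
  have "cost v \<le> cost (\<lambda>q. \<Sum>i\<in>K. delta (delta (i, i0), Rw i0 i W) q) + cost (\<lambda>q. \<Sum>p\<in>?F. u p * Dr p q)"
    unfolding v_def by (rule cost_add) (use v1 v2 in \<open>auto simp: free_tensor_def\<close>)
  also have "\<dots> \<le> l1norm W + e" using c1 c2 dC by linarith
  finally have "cost v \<le> l1norm (tmap M_mult u) + e" unfolding W_def .
  then show ?thesis using Ev vF by blast
qed


lemma self_dense:
  fixes z :: "'i \<times> 'i \<Rightarrow> complex"
  assumes z: "z \<in> l1" and ep: "e > 0"
  shows "\<exists>u\<in>free_tensor (l1 :: ('i \<times> 'i \<Rightarrow> complex) set) (l1 :: ('i \<times> 'i \<Rightarrow> complex) set). l1norm (\<lambda>t. tmap M_mult u t - z t) < e"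
proof -
  define i0 :: 'i where "i0 = undefined"
  obtain S where S: "finite S" "\<forall>p\<in>{z}. infsum (\<lambda>q. norm (p q)) (UNIV - S) < e"
    using tail[of "{z}" "\<lambda>p. p" e] z ep by auto
  define K where "K = fst ` S"
  have finK: "finite K" unfolding K_def using S(1) by simp
  define u where "u = (\<lambda>q. \<Sum>i\<in>K. delta (delta (i, i0), Rw i0 i z) q)"
  have uF: "u \<in> free_tensor l1 l1"
    unfolding u_def by (rule free_tensor_sum[OF finK free_tensor_delta[OF l1_delta(1) Rw_l1(1)[OF z]]])
  have "tmap M_mult u = (\<lambda>t. \<Sum>i\<in>K. tmap M_mult (delta (delta (i, i0), Rw i0 i z)) t)"
    unfolding u_def by (rule tmap_sum[OF finK finite_fsupp_delta])
  also have "\<dots> = trunc K z"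
    unfolding tmap_delta fst_conv snd_conv by (rule trunc_sum[OF finK])
  finally have tu: "tmap M_mult u = trunc K z" .
  have "(\<lambda>t. trunc K z t - z t) = (\<lambda>t. (-1) * rest K z t)"
    by (auto simp: trunc_def rest_def)
  then have "l1norm (\<lambda>t. tmap M_mult u t - z t) = l1norm (rest K z)"
    unfolding tu using l1norm_scale[of "-1" "rest K z"] by simp
  also have "\<dots> \<le> infsum (\<lambda>q. norm (z q)) (UNIV - S)"
    by (rule rest_bound[OF z]) (simp add: K_def)
  also have "\<dots> < e" using S(2) by simp
  finally show ?thesis using uF by blast
qed

lemma self_induced: "M_self_induced TYPE('i)"
  unfolding M_self_induced_def
  by (rule TM.induced[OF self_approx self_dense]) auto

theorem proposition1:
  shows "(l1_left_induced TYPE('i) \<and> l1_right_induced TYPE('i)) \<and> M_self_induced TYPE('i)"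
  using left_induced right_induced self_induced by blast


end
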